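(* Let $n\in\mathbb{N}$, $r\in(0,+\infty)$, let $A$ be an Arens–Michael algebra and let $a=(a_1,\dots,a_n)\in A^n$ be strictly spectrally $r$-contractive. Then there exists a unique continuous homomorphism $\gamma_a:\mathcal{F}^T(\mathbb{D}_r^n)\to A$ with $\gamma_a(\zeta_i)=a_i$ for $i=1,\dots,n$. Conversely, for every continuous homomorphism $\varphi:\mathcal{F}^T(\mathbb{D}_r^n)\to A$, the tuple $(\varphi(\zeta_1),\dots,\varphi(\zeta_n))$ is strictly spectrally $r$-contractive. Hence $a\mapsto\gamma_a$ is a bijection (natural in $A$) from the set of strictly spectrally $r$-contractive $n$-tuples in $A^n$ onto the set of continuous homomorphisms $\mathcal{F}^T(\mathbb{D}_r^n)\to A$.
   Context: All algebras are unital, homomorphisms unital. An Arens–Michael algebra is a complete locally convex algebra whose topology is given by a family of submultiplicative seminorms. $W_n$ is the set of all finite words $\alpha=(\alpha_1,\dots,\alpha_d)$ with $\alpha_j\in\{1,\dots,n\}$, $d\ge0$, $|\alpha|=d$; $W_{n,d}$ the words of length $d$; for $a\in A^n$, $a_\alpha=a_{\alpha_1}\cdots a_{\alpha_d}$ ($a_\emptyset=1$). $\mathcal{F}^T(\mathbb{D}_r^n)=\{\sum_{\alpha\in W_n}c_\alpha\zeta_\alpha:\|\cdot\|_\rho<\infty\ \forall\rho\in(0,r)\}$ with $\|\sum c_\alpha\zeta_\alpha\|_\rho=\sum_\alpha|c_\alpha|\rho^{|\alpha|}$, topology given by these norms and multiplication by concatenation of words. For a Banach algebra $B$ and $b\in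 B^n$, $r_\infty(b)=\lim_{d\to\infty}(\sup_{\alpha\in W_{n,d}}\|b_\alpha\|)^{1/d}$. An $n$-tuple $a\in A^n$ in an Arens–Michael algebra $A$ is strictly spectrally $r$-contractive if for every Banach algebra $B$ and every continuous homomorphism $\varphi:A\to B$ one has $r_\infty(\varphi(a))<r$; equivalently, for every continuous submultiplicative seminorm $\|\cdot\|$ on $A$ from a directed defining family, $\lim_{d\to\infty}(\sup_{\alpha\in W_{n,d}}\|a_\alpha\|)^{1/d}<r$. *)

theory Defs
  imports "HOL-Analysis.Analysis"
begin

text \<open>The carrier is a type
  of class ring_1 (unital ring); the complex scalar multiplication is an explicit
  parameter smul; the topology is given by a family P of seminorms.\<close>

definition cauchy_filter_P :: "('a::ring_1 \<Rightarrow> real) set \<Rightarrow> 'a filter \<Rightarrow> bool" where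
  "cauchy_filter_P P F \<longleftrightarrow>
     (\<forall>p\<in>P. \<forall>e>0. eventually (\<lambda>(x, y). p (x - y) < e) (F \<times>\<^sub>F F))"

definition converges_P :: "('a::ring_1 \<Rightarrow> real) set \<Rightarrow> 'a filter \<Rightarrow> 'a \<Rightarrow> bool" where
  "converges_P P F x \<longleftrightarrow> (\<forall>p\<in>P. \<forall>e>0. eventually (\<lambda>y. p (y - x) < e) F)"

definition AM_algebra :: "(complex \<Rightarrow> 'a::ring_1 \<Rightarrow> 'a) \<Rightarrow> ('a \<Rightarrow> real) set \<Rightarrow> bool" where
  "AM_algebra smul P \<longleftrightarrow>
     \<comment> \<open>complex algebra axioms\<close>
     (\<forall>z w x. smul z (smul w x) = smul (z * w) x) \<and>
     (\<forall>x. smul 1 x = x) \<and>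
     (\<forall>z w x. smul (z + w) x = smul z x + smul w x) \<and>
     (\<forall>z x y. smul z (x + y) = smul z x + smul z y) \<and>
     (\<forall>z x y. smul z (x * y) = smul z x * y) \<and>
     (\<forall>z x y. smul z (x * y) = x * smul z y) \<and>
     \<comment> \<open>submultiplicative seminorms\<close>
     (\<forall>p\<in>P. (\<forall>z x. p (smul z x) = cmod z * p x) \<and>
             (\<forall>x y. p (x + y) \<le> p x + p y) \<and>
             (\<forall>x y. p (x * y) \<le> p x * p y)) \<and>
     \<comment> \<open>directed defining family\<close>
     (\<forall>p\<in>P. \<forall>q\<in>P. \<exists>s\<in>P. \<forall>x. p x \<le> s x \<and> q x \<le> s x) \<and>
     \<comment> \<open>Hausdorff\<close>
     (\<forall>x. (\<forall>p\<in>P. p x = 0) \<longrightarrow> x = 0) \<and>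
     \<comment> \<open>complete: every Cauchy filter converges\<close>
     (\<forall>F. F \<noteq> bot \<and> cauchy_filter_P P F \<longrightarrow> (\<exists>x. converges_P P F x))"

definition cont_hom ::
  "(complex \<Rightarrow> 'a::ring_1 \<Rightarrow> 'a) \<Rightarrow> ('a \<Rightarrow> real) set \<Rightarrow>
   (complex \<Rightarrow> 'b::ring_1 \<Rightarrow> 'b) \<Rightarrow> ('b \<Rightarrow> real) set \<Rightarrow> ('a \<Rightarrow> 'b) \<Rightarrow> bool" where
  "cont_hom smulA PA smulB PB \<psi> \<longleftrightarrow>
     (\<forall>x y. \<psi> (x + y) = \<psi> x + \<psi> y) \<and>
     (\<forall>z x. \<psi> (smulA z x) = smulB z (\<psi> x)) \<and>
     (\<forall>x y. \<psi> (x * y) = \<psi> x * \<psi> y) \<and>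
     \<psi> 1 = 1 \<and>
     (\<forall>q\<in>PB. \<exists>p\<in>PA. \<exists>C. \<forall>x. q (\<psi> x) \<le> C * p x)"

definition words :: "nat \<Rightarrow> nat list set" where
  "words n = {\<alpha>. \<forall>i\<in>set \<alpha>. i < n}"

text \<open>The algebra F^T(D_r^n): coefficient functions on words.\<close>
definition FT :: "nat \<Rightarrow> real \<Rightarrow> (nat list \<Rightarrow> complex) set" where
  "FT n r = {c. (\<forall>\<alpha>. \<alpha> \<notin> words n \<longrightarrow> c \<alpha> = 0) \<and>
     (\<forall>\<rho>. 0 < \<rho> \<and> \<rho> < r \<longrightarrow> (\<lambda>\<alpha>. cmod (c \<alpha>) * \<rho> ^ length \<alpha>) summable_on words n)}"

definition ft_norm :: "nat \<Rightarrow> real \<Rightarrow> (nat list \<Rightarrow> complex) \<Rightarrow> real" where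
  "ft_norm n \<rho> c = (\<Sum>\<^sub>\<infinity>\<alpha>\<in>words n. cmod (c \<alpha>) * \<rho> ^ length \<alpha>)"

definition ft_add :: "(nat list \<Rightarrow> complex) \<Rightarrow> (nat list \<Rightarrow> complex) \<Rightarrow> nat list \<Rightarrow> complex" where
  "ft_add c d = (\<lambda>\<alpha>. c \<alpha> + d \<alpha>)"

definition ft_smul :: "complex \<Rightarrow> (nat list \<Rightarrow> complex) \<Rightarrow> nat list \<Rightarrow> complex" where
  "ft_smul z c = (\<lambda>\<alpha>. z * c \<alpha>)"

text \<open>Multiplication: concatenation of words, i.e. sum over all splittings.\<close>
definition ft_mult :: "(nat list \<Rightarrow> complex) \<Rightarrow> (nat list \<Rightarrow> complex) \<Rightarrow> nat list \<Rightarrow> complex" where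
  "ft_mult c d = (\<lambda>\<gamma>. \<Sum>k\<le>length \<gamma>. c (take k \<gamma>) * d (drop k \<gamma>))"

definition ft_one :: "nat list \<Rightarrow> complex" where
  "ft_one = (\<lambda>\<alpha>. if \<alpha> = [] then 1 else 0)"

text \<open>The generator zeta_(i+1) (0-based index i).\<close>
definition ft_gen :: "nat \<Rightarrow> nat list \<Rightarrow> complex" where
  "ft_gen i = (\<lambda>\<alpha>. if \<alpha> = [i] then 1 else 0)"

definition ft_cont_homs ::
  "(complex \<Rightarrow> 'a::ring_1 \<Rightarrow> 'a) \<Rightarrow> ('a \<Rightarrow> real) set \<Rightarrow> nat \<Rightarrow> real \<Rightarrow>
   ((nat list \<Rightarrow> complex) \<Rightarrow> 'a) set" where
  "ft_cont_homs smul P n r = {\<phi>. \<phi> \<in> extensional (FT n r) \<and>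
     (\<forall>c\<in>FT n r. \<forall>d\<in>FT n r. \<phi> (ft_add c d) = \<phi> c + \<phi> d) \<and>
     (\<forall>z. \<forall>c\<in>FT n r. \<phi> (ft_smul z c) = smul z (\<phi> c)) \<and>
     (\<forall>c\<in>FT n r. \<forall>d\<in>FT n r. \<phi> (ft_mult c d) = \<phi> c * \<phi> d) \<and>
     \<phi> ft_one = 1 \<and>
     (\<forall>p\<in>P. \<exists>\<rho>. 0 < \<rho> \<and> \<rho> < r \<and> (\<exists>C. \<forall>c\<in>FT n r. p (\<phi> c) \<le> C * ft_norm n \<rho> c))}"

text \<open>a_alpha for a tuple a given as a list of length n.\<close>
definition word_prod :: "'a::monoid_mult list \<Rightarrow> nat list \<Rightarrow> 'a" where
  "word_prod a \<alpha> = prod_list (map (\<lambda>i. a ! i) \<alpha>)"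

text \<open>Strict spectral r-contractivity, via the (directed) defining family P.
  The supremum over the finite set W_{n,d} is taken together with 0
  (which is harmless as seminorms are nonnegative, and gives 0 for n = 0).\<close>
definition ssc :: "('a::ring_1 \<Rightarrow> real) set \<Rightarrow> nat \<Rightarrow> real \<Rightarrow> 'a list \<Rightarrow> bool" where
  "ssc P n r a \<longleftrightarrow> (\<forall>p\<in>P.
     lim (\<lambda>d. root d (Max (insert 0 {p (word_prod a \<alpha>) | \<alpha>. \<alpha> \<in> words n \<and> length \<alpha> = d}))) < r)"

definition ft_gamma ::
  "(complex \<Rightarrow> 'a::ring_1 \<Rightarrow> 'a) \<Rightarrow> ('a \<Rightarrow> real) set \<Rightarrow> nat \<Rightarrow> real \<Rightarrow> 'a list \<Rightarrow>
   (nat list \<Rightarrow> complex) \<Rightarrow> 'a" where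
  "ft_gamma smul P n r a = (THE \<phi>. \<phi> \<in> ft_cont_homs smul P n r \<and> (\<forall>i<n. \<phi> (ft_gen i) = a ! i))"

end

theory Submission
  imports Defs
begin


locale am =
  fixes smul :: "complex \<Rightarrow> 'a::ring_1 \<Rightarrow> 'a" and P :: "('a \<Rightarrow> real) set"
  assumes AM: "AM_algebra smul P"
begin

lemma AMu: "(\<forall>z w x. smul z (smul w x) = smul (z * w) x) \<and>
     (\<forall>x. smul 1 x = x) \<and>
     (\<forall>z w x. smul (z + w) x = smul z x + smul w x) \<and>
     (\<forall>z x y. smul z (x + y) = smul z x + smul z y) \<and>
     (\<forall>z x y. smul z (x * y) = smul z x * y) \<and>
     (\<forall>z x y. smul z (x * y) = x * smul z y) \<and>
     (\<forall>p\<in>P. (\<forall>z x. p (smul z x) = cmod z * p x) \<and>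
             (\<forall>x y. p (x + y) \<le> p x + p y) \<and>
             (\<forall>x y. p (x * y) \<le> p x * p y)) \<and>
     (\<forall>p\<in>P. \<forall>q\<in>P. \<exists>s\<in>P. \<forall>x. p x \<le> s x \<and> q x \<le> s x) \<and>
     (\<forall>x. (\<forall>p\<in>P. p x = 0) \<longrightarrow> x = 0) \<and>
     (\<forall>F. F \<noteq> bot \<and> cauchy_filter_P P F \<longrightarrow> (\<exists>x. converges_P P F x))"
  using AM unfolding AM_algebra_def .

lemma smul_assoc: "smul z (smul w x) = smul (z * w) x" using conjunct1[OF AMu] by simp
lemma smul_one: "smul 1 x = x" using conjunct1[OF conjunct2[OF AMu]] by simp
lemma smul_add_left: "smul (z + w) x = smul z x + smul w x" using conjunct1[OF conjunct2[OF conjunct2[OF AMu]]] by simp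
lemma smul_add_right: "smul z (x + y) = smul z x + smul z y" using conjunct1[OF conjunct2[OF conjunct2[OF conjunct2[OF AMu]]]] by simp
lemma smul_mult_left: "smul z (x * y) = smul z x * y" using conjunct1[OF conjunct2[OF conjunct2[OF conjunct2[OF conjunct2[OF AMu]]]]] by simp
lemma smul_mult_right: "smul z (x * y) = x * smul z y" using conjunct1[OF conjunct2[OF conjunct2[OF conjunct2[OF conjunct2[OF conjunct2[OF AMu]]]]]] by simp
lemma sn_smul: "p \<in> P \<Longrightarrow> p (smul z x) = cmod z * p x" using conjunct1[OF conjunct2[OF conjunct2[OF conjunct2[OF conjunct2[OF conjunct2[OF conjunct2[OF AMu]]]]]]] by simp
lemma sn_add: "p \<in> P \<Longrightarrow> p (x + y) \<le> p x + p y" using conjunct1[OF conjunct2[OF conjunct2[OF conjunct2[OF conjunct2[OF conjunct2[OF conjunct2[OF AMu]]]]]]] by simp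
lemma sn_mult: "p \<in> P \<Longrightarrow> p (x * y) \<le> p x * p y" using conjunct1[OF conjunct2[OF conjunct2[OF conjunct2[OF conjunct2[OF conjunct2[OF conjunct2[OF AMu]]]]]]] by simp
lemma directed: "p \<in> P \<Longrightarrow> q \<in> P \<Longrightarrow> \<exists>s\<in>P. \<forall>x. p x \<le> s x \<and> q x \<le> s x" using conjunct1[OF conjunct2[OF conjunct2[OF conjunct2[OF conjunct2[OF conjunct2[OF conjunct2[OF conjunct2[OF AMu]]]]]]]] by simp
lemma sep: "(\<And>p. p \<in> P \<Longrightarrow> p x = 0) \<Longrightarrow> x = 0" using conjunct1[OF conjunct2[OF conjunct2[OF conjunct2[OF conjunct2[OF conjunct2[OF conjunct2[OF conjunct2[OF conjunct2[OF AMu]]]]]]]]] by simp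
lemma complete_P: "F \<noteq> bot \<Longrightarrow> cauchy_filter_P P F \<Longrightarrow> \<exists>x. converges_P P F x" using conjunct2[OF conjunct2[OF conjunct2[OF conjunct2[OF conjunct2[OF conjunct2[OF conjunct2[OF conjunct2[OF AMu]]]]]]]] by simp

lemma smul_zero_left[simp]: "smul 0 x = 0"
  using smul_add_left[of 0 0 x] by simp
lemma smul_zero_right[simp]: "smul z 0 = 0"
  using smul_add_right[of z 0 0] by simp
lemma smul_minus_right: "smul z (- x) = - smul z x"
proof -
  have "smul z x + smul z (- x) = 0" using smul_add_right[of z x "-x"] by simp
  then show ?thesis by (simp add: add_eq_0_iff2)
qed
lemma smul_diff_right: "smul z (x - y) = smul z x - smul z y"
  using smul_add_right[of z x "-y"] smul_minus_right[of z y] by simp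
lemma smul_neg1: "smul (-1) x = - x"
proof -
  have "smul 1 x + smul (-1) x = 0" using smul_add_left[of 1 "-1" x] by simp
  then show ?thesis by (simp add: smul_one add_eq_0_iff)
qed
lemma smul_sum_left: "smul (\<Sum>i\<in>F. f i) x = (\<Sum>i\<in>F. smul (f i) x)"
  by (induction F rule: infinite_finite_induct) (auto simp: smul_add_left)
lemma smul_sum_right: "smul z (\<Sum>i\<in>F. f i) = (\<Sum>i\<in>F. smul z (f i))"
  by (induction F rule: infinite_finite_induct) (auto simp: smul_add_right)
lemma smul_mult_both: "smul (z * w) (x * y) = smul z x * smul w y"
proof -
  have "smul z x * smul w y = smul z (x * smul w y)" by (simp add: smul_mult_left)
  also have "\<dots> = smul z (smul w (x * y))" by (simp add: smul_mult_right)
  also have "\<dots> = smul (z * w) (x * y)" by (simp add: smul_assoc)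
  finally show ?thesis by simp
qed

lemma sn_zero[simp]: "p \<in> P \<Longrightarrow> p 0 = 0"
  using sn_smul[of p 0 0] by simp
lemma sn_minus: "p \<in> P \<Longrightarrow> p (- x) = p x"
  using sn_smul[of p "-1" x] by (simp add: smul_neg1)
lemma sn_nonneg: "p \<in> P \<Longrightarrow> 0 \<le> p x"
proof -
  assume p: "p \<in> P"
  have "p (x + - x) \<le> p x + p (- x)" using sn_add[OF p] .
  then show ?thesis using sn_minus[OF p, of x] p by simp
qed
lemma sn_diff_sym: "p \<in> P \<Longrightarrow> p (x - y) = p (y - x)"
  using sn_minus[of p "y - x"] by simp
lemma sn_diff: "p \<in> P \<Longrightarrow> p (x - z) \<le> p (x - y) + p (y - z)"
  using sn_add[of p "x - y" "y - z"] by simp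
lemma sn_sum: "p \<in> P \<Longrightarrow> p (\<Sum>i\<in>F. f i) \<le> (\<Sum>i\<in>F. p (f i))"
proof (induction F rule: infinite_finite_induct)
  case (insert x F)
  then show ?case using sn_add[of p "f x" "sum f F"] by simp
qed auto

lemma P_ne: "P \<noteq> {}"
proof
  assume "P = {}"
  then have "(1::'a) = 0" using sep[of 1] by simp
  then show False by simp
qed

end


context am begin

definition conv :: "(nat \<Rightarrow> 'a) \<Rightarrow> 'a \<Rightarrow> bool" where
  "conv f x \<longleftrightarrow> (\<forall>p\<in>P. (\<lambda>N. p (f N - x)) \<longlonglongrightarrow> 0)"

lemma null_le: fixes u v :: "nat \<Rightarrow> real" shows "(\<And>N. 0 \<le> u N) \<Longrightarrow> (\<And>N. u N \<le> v N) \<Longrightarrow> v \<longlonglongrightarrow> 0 \<Longrightarrow> u \<longlonglongrightarrow> 0"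
  by (rule Lim_null_comparison[where g=v]) auto

lemma add_null: assumes "(u::nat\<Rightarrow>real) \<longlonglongrightarrow> 0" "(v::nat\<Rightarrow>real) \<longlonglongrightarrow> 0"
  shows "(\<lambda>N. u N + v N) \<longlonglongrightarrow> 0"
  using tendsto_add[OF assms] by simp

lemma conv_unique: assumes "conv f x" "conv f y" shows "x = y"
proof -
  have "p (x - y) = 0" if p: "p \<in> P" for p
  proof -
    have t: "(\<lambda>N. p (f N - x) + p (f N - y)) \<longlonglongrightarrow> 0"
      using assms p unfolding conv_def by (intro add_null) auto
    have "p (x - y) \<le> p (f N - x) + p (f N - y)" for N
      using sn_diff[OF p, of x y "f N"] sn_diff_sym[OF p, of x "f N"] by linarith
    then have "p (x - y) \<le> 0" using LIMSEQ_le_const[OF t] by auto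
    then show ?thesis using sn_nonneg[OF p] by (meson antisym)
  qed
  then show ?thesis using sep[of "x - y"] by simp
qed

lemma conv_const: "conv (\<lambda>N. x) x" unfolding conv_def by simp

lemma conv_cong_ev: "conv f x \<Longrightarrow> (\<And>N. N \<ge> N0 \<Longrightarrow> g N = f N) \<Longrightarrow> conv g x"
  unfolding conv_def
proof (intro ballI)
  fix p assume "\<forall>p\<in>P. (\<lambda>N. p (f N - x)) \<longlonglongrightarrow> 0" "p \<in> P" "(\<And>N. N \<ge> N0 \<Longrightarrow> g N = f N)"
  then show "(\<lambda>N. p (g N - x)) \<longlonglongrightarrow> 0"
    by (metis (mono_tags, lifting) eventually_sequentially tendsto_cong)
qed

lemma conv_add: assumes "conv f x" "conv g y" shows "conv (\<lambda>N. f N + g N) (x + y)"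
  unfolding conv_def
proof
  fix p assume p: "p \<in> P"
  have t: "(\<lambda>N. p (f N - x) + p (g N - y)) \<longlonglongrightarrow> 0"
    using assms p unfolding conv_def by (intro add_null) auto
  show "(\<lambda>N. p (f N + g N - (x + y))) \<longlonglongrightarrow> 0"
  proof (rule null_le[OF _ _ t])
    fix N show "0 \<le> p (f N + g N - (x + y))" using sn_nonneg[OF p] .
    have "f N + g N - (x + y) = (f N - x) + (g N - y)" by (simp add: algebra_simps)
    then show "p (f N + g N - (x + y)) \<le> p (f N - x) + p (g N - y)" by (simp only: sn_add[OF p])
  qed
qed

lemma conv_minus: assumes "conv f x" shows "conv (\<lambda>N. - f N) (- x)"
  using assms unfolding conv_def
proof (intro ballI)
  fix p assume "\<forall>p\<in>P. (\<lambda>N. p (f N - x)) \<longlonglongrightarrow> 0" "p \<in> P"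
  moreover have "p (- f N - - x) = p (f N - x)" if "p \<in> P" for N
    using sn_minus[OF that, of "f N - x"] by (simp add: algebra_simps)
  ultimately show "(\<lambda>N. p (- f N - - x)) \<longlonglongrightarrow> 0" by simp
qed

lemma conv_diff: "conv f x \<Longrightarrow> conv g y \<Longrightarrow> conv (\<lambda>N. f N - g N) (x - y)"
  using conv_add[OF _ conv_minus, of f x g y] by simp

lemma conv_smul: assumes "conv f x" shows "conv (\<lambda>N. smul z (f N)) (smul z x)"
  unfolding conv_def
proof
  fix p assume p: "p \<in> P"
  have "p (smul z (f N) - smul z x) = cmod z * p (f N - x)" for N
    by (simp add: smul_diff_right[symmetric] sn_smul[OF p])
  moreover have "(\<lambda>N. cmod z * p (f N - x)) \<longlonglongrightarrow> 0"
    using assms p unfolding conv_def by (metis mult_zero_right tendsto_mult_left)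
  ultimately show "(\<lambda>N. p (smul z (f N) - smul z x)) \<longlonglongrightarrow> 0" by simp
qed

lemma conv_mult: assumes "conv f x" "conv g y" shows "conv (\<lambda>N. f N * g N) (x * y)"
  unfolding conv_def
proof
  fix p assume p: "p \<in> P"
  have a: "(\<lambda>N. p (f N - x)) \<longlonglongrightarrow> 0" and b: "(\<lambda>N. p (g N - y)) \<longlonglongrightarrow> 0"
    using assms p unfolding conv_def by auto
  have t: "(\<lambda>N. p (f N - x) * (p (g N - y) + p y) + p x * p (g N - y)) \<longlonglongrightarrow> 0 * (0 + p y) + p x * 0"
    by (intro tendsto_intros a b)
  show "(\<lambda>N. p (f N * g N - x * y)) \<longlonglongrightarrow> 0"
  proof (rule null_le[OF _ _ t[simplified]])
    fix N show "0 \<le> p (f N * g N - x * y)" using sn_nonneg[OF p] .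
    have e: "f N * g N - x * y = (f N - x) * g N + x * (g N - y)" by (simp add: algebra_simps)
    have "p (f N * g N - x * y) \<le> p ((f N - x) * g N) + p (x * (g N - y))"
      unfolding e using sn_add[OF p] .
    also have "\<dots> \<le> p (f N - x) * p (g N) + p x * p (g N - y)"
      using sn_mult[OF p] by (meson add_mono)
    also have "\<dots> \<le> p (f N - x) * (p (g N - y) + p y) + p x * p (g N - y)"
    proof -
      have "p (g N) \<le> p (g N - y) + p y" using sn_add[OF p, of "g N - y" y] by simp
      then show ?thesis using sn_nonneg[OF p] by (simp add: mult_left_mono)
    qed
    finally show "p (f N * g N - x * y) \<le> p (f N - x) * (p (g N - y) + p y) + p x * p (g N - y)" .
  qed
qed

lemma conv_bound: assumes "conv f x" "p \<in> P" "\<And>N. N \<ge> N0 \<Longrightarrow> p (f N) \<le> B" shows "p x \<le> B"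
proof -
  have t: "(\<lambda>N. B + p (f N - x)) \<longlonglongrightarrow> B + 0"
    using assms unfolding conv_def by (intro tendsto_intros) auto
  have "p x \<le> B + p (f N - x)" if "N \<ge> N0" for N
  proof -
    have "p x \<le> p (f N) + p (x - f N)" using sn_add[OF assms(2), of "f N" "x - f N"] by simp
    then show ?thesis using assms(3)[OF that] sn_diff_sym[OF assms(2), of x "f N"] by simp
  qed
  then show ?thesis using LIMSEQ_le_const[OF t] by auto
qed

lemma conv_null: assumes "conv g y" "\<And>p. p \<in> P \<Longrightarrow> (\<lambda>N. p (f N - g N)) \<longlonglongrightarrow> 0" shows "conv f y"
  unfolding conv_def
proof
  fix p assume p: "p \<in> P"
  have t: "(\<lambda>N. p (f N - g N) + p (g N - y)) \<longlonglongrightarrow> 0"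
    using assms p unfolding conv_def by (intro add_null) auto
  show "(\<lambda>N. p (f N - y)) \<longlonglongrightarrow> 0"
    by (rule null_le[OF _ _ t]) (auto intro: sn_nonneg[OF p] sn_diff[OF p])
qed

lemma conv_cauchy:
  assumes c: "\<And>p e. p \<in> P \<Longrightarrow> e > 0 \<Longrightarrow> \<exists>N0. \<forall>N\<ge>N0. \<forall>M\<ge>N0. p (f N - f M) < e"
  shows "\<exists>x. conv f x"
proof -
  let ?F = "filtermap f sequentially"
  have nb: "?F \<noteq> bot" by (simp add: filtermap_bot_iff)
  have "cauchy_filter_P P ?F" unfolding cauchy_filter_P_def
  proof (intro ballI allI impI)
    fix p e assume "p \<in> P" "(0::real) < e"
    then obtain N0 where N0: "\<forall>N\<ge>N0. \<forall>M\<ge>N0. p (f N - f M) < e" using c by blast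
    let ?Q = "\<lambda>x. \<exists>N\<ge>N0. x = f N"
    have "eventually ?Q ?F" unfolding eventually_filtermap eventually_sequentially by blast
    then show "\<forall>\<^sub>F (x, y) in ?F \<times>\<^sub>F ?F. p (x - y) < e"
      unfolding eventually_prod_filter using N0 by (intro exI[of _ ?Q]) auto
  qed
  then obtain x where x: "converges_P P ?F x" using complete_P[OF nb] by blast
  have "conv f x" unfolding conv_def
  proof
    fix p assume p: "p \<in> P"
    show "(\<lambda>N. p (f N - x)) \<longlonglongrightarrow> 0"
    proof (rule order_tendstoI)
      fix a :: real assume "a < 0" then show "\<forall>\<^sub>F N in sequentially. a < p (f N - x)"
        using sn_nonneg[OF p] by (simp add: less_le_trans)
    next
      fix a :: real assume "0 < a" then show "\<forall>\<^sub>F N in sequentially. p (f N - x) < a"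
        using x p unfolding converges_P_def eventually_filtermap by blast
    qed
  qed
  then show ?thesis by blast
qed

end


definition wl :: "nat \<Rightarrow> nat \<Rightarrow> nat list set" where
  "wl n d = {\<alpha>\<in>words n. length \<alpha> = d}"

lemma finite_wl: "finite (wl n d)"
proof -
  have "wl n d = {xs. set xs \<subseteq> {..<n} \<and> length xs = d}"
    unfolding wl_def words_def by auto
  then show ?thesis using finite_lists_length_eq[of "{..<n}" d] by simp
qed

lemma words_append[simp]: "\<beta> @ \<delta> \<in> words n \<longleftrightarrow> \<beta> \<in> words n \<and> \<delta> \<in> words n"
  unfolding words_def by auto

lemma words_take: "\<gamma> \<in> words n \<Longrightarrow> take i \<gamma> \<in> words n"
  unfolding words_def by (auto dest: in_set_takeD)
lemma words_drop: "\<gamma> \<in> words n \<Longrightarrow> drop i \<gamma> \<in> words n"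
  unfolding words_def by (auto dest: in_set_dropD)

lemma split_sum:
  fixes g :: "nat list \<Rightarrow> nat list \<Rightarrow> 'b::comm_monoid_add"
  assumes "i \<le> k"
  shows "(\<Sum>\<gamma>\<in>wl n k. g (take i \<gamma>) (drop i \<gamma>)) = (\<Sum>\<beta>\<in>wl n i. \<Sum>\<delta>\<in>wl n (k - i). g \<beta> \<delta>)"
proof -
  let ?h = "\<lambda>(\<beta>::nat list, \<delta>::nat list). \<beta> @ \<delta>"
  have bij: "bij_betw ?h (wl n i \<times> wl n (k - i)) (wl n k)"
  proof (rule bij_betwI')
    fix x y assume "x \<in> wl n i \<times> wl n (k - i)" "y \<in> wl n i \<times> wl n (k - i)"
    then show "(?h x = ?h y) = (x = y)" unfolding wl_def
      by (cases x; cases y) (simp add: append_eq_append_conv)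
  next
    fix x assume "x \<in> wl n i \<times> wl n (k - i)"
    then show "?h x \<in> wl n k" using assms unfolding wl_def by auto
  next
    fix y assume y: "y \<in> wl n k"
    then have "(take i y, drop i y) \<in> wl n i \<times> wl n (k - i)"
      using assms unfolding wl_def by (auto simp: words_take words_drop)
    moreover have "y = ?h (take i y, drop i y)" by simp
    ultimately show "\<exists>x\<in>wl n i \<times> wl n (k - i). y = ?h x" by blast
  qed
  have "(\<Sum>\<beta>\<in>wl n i. \<Sum>\<delta>\<in>wl n (k - i). g \<beta> \<delta>) = (\<Sum>x\<in>wl n i \<times> wl n (k - i). case x of (\<beta>, \<delta>) \<Rightarrow> g \<beta> \<delta>)"
    by (simp add: sum.cartesian_product)
  also have "\<dots> = (\<Sum>x\<in>wl n i \<times> wl n (k - i). (\<lambda>\<gamma>. g (take i \<gamma>) (drop i \<gamma>)) (?h x))"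
    by (rule sum.cong) (auto simp: wl_def)
  also have "\<dots> = (\<Sum>\<gamma>\<in>wl n k. g (take i \<gamma>) (drop i \<gamma>))"
    by (rule sum.reindex_bij_betw[OF bij])
  finally show ?thesis by simp
qed

lemma word_prod_append: "word_prod a (\<beta> @ \<delta>) = word_prod a \<beta> * word_prod a \<delta>"
  unfolding word_prod_def by simp

lemma word_prod_Nil[simp]: "word_prod a [] = 1" unfolding word_prod_def by simp
lemma word_prod_Cons: "word_prod a (i # \<beta>) = a ! i * word_prod a \<beta>" unfolding word_prod_def by simp

definition mk :: "nat \<Rightarrow> real \<Rightarrow> (nat list \<Rightarrow> complex) \<Rightarrow> nat \<Rightarrow> real" where
  "mk n \<rho> c k = (\<Sum>\<alpha>\<in>wl n k. cmod (c \<alpha>) * \<rho> ^ k)"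

lemma mk_nonneg: "0 \<le> \<rho> \<Longrightarrow> 0 \<le> mk n \<rho> c k"
  unfolding mk_def by (intro sum_nonneg) auto

lemma wl_disjoint: "k \<noteq> k' \<Longrightarrow> wl n k \<inter> wl n k' = {}" unfolding wl_def by auto

lemma sum_wl_union:
  "(\<Sum>k<N. \<Sum>\<alpha>\<in>wl n k. g \<alpha>) = (\<Sum>\<alpha>\<in>(\<Union>k<N. wl n k). g \<alpha>)"
  by (subst sum.UNION_disjoint) (auto simp: finite_wl finite_wl[unfolded wl_def] wl_def)

lemma FT_summable: "c \<in> FT n r \<Longrightarrow> 0 < \<rho> \<Longrightarrow> \<rho> < r \<Longrightarrow>
  (\<lambda>\<alpha>. cmod (c \<alpha>) * \<rho> ^ length \<alpha>) summable_on words n"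
  unfolding FT_def by auto

lemma FT_zero: "c \<in> FT n r \<Longrightarrow> \<alpha> \<notin> words n \<Longrightarrow> c \<alpha> = 0"
  unfolding FT_def by auto

lemma ft_norm_nonneg: "0 \<le> \<rho> \<Longrightarrow> 0 \<le> ft_norm n \<rho> c"
  unfolding ft_norm_def by (intro infsum_nonneg) auto

lemma mk_partial_le:
  assumes "c \<in> FT n r" "0 < \<rho>" "\<rho> < r"
  shows "(\<Sum>k<N. mk n \<rho> c k) \<le> ft_norm n \<rho> c"
proof -
  have "(\<Sum>k<N. mk n \<rho> c k) = (\<Sum>\<alpha>\<in>(\<Union>k<N. wl n k). cmod (c \<alpha>) * \<rho> ^ length \<alpha>)"
    unfolding mk_def sum_wl_union[symmetric]
    by (intro sum.cong refl) (auto simp: wl_def)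
  also have "\<dots> \<le> ft_norm n \<rho> c" unfolding ft_norm_def
    using assms by (intro finite_sum_le_infsum FT_summable) (auto simp: finite_wl finite_wl[unfolded wl_def] wl_def)
  finally show ?thesis .
qed

lemma mk_summable:
  assumes "c \<in> FT n r" "0 < \<rho>" "\<rho> < r"
  shows "summable (mk n \<rho> c)" "suminf (mk n \<rho> c) \<le> ft_norm n \<rho> c"
  using mk_partial_le[OF assms] mk_nonneg assms(2)
  by (auto intro!: summableI_nonneg_bounded suminf_le_const)



lemma FT_add: assumes "c \<in> FT n r" "d \<in> FT n r" shows "ft_add c d \<in> FT n r"
  unfolding FT_def mem_Collect_eq
proof (intro conjI allI impI)
  fix \<alpha> assume "\<alpha> \<notin> words n" then show "ft_add c d \<alpha> = 0"
    using FT_zero[OF assms(1)] FT_zero[OF assms(2)] unfolding ft_add_def by simp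
next
  fix \<rho> :: real assume r: "0 < \<rho> \<and> \<rho> < r"
  have s: "(\<lambda>\<alpha>. cmod (c \<alpha>) * \<rho> ^ length \<alpha> + cmod (d \<alpha>) * \<rho> ^ length \<alpha>) summable_on words n"
    using assms r by (intro summable_on_add FT_summable) auto
  show "(\<lambda>\<alpha>. cmod (ft_add c d \<alpha>) * \<rho> ^ length \<alpha>) summable_on words n"
  proof (rule summable_on_comparison_test[OF s])
    fix \<alpha> show "0 \<le> cmod (ft_add c d \<alpha>) * \<rho> ^ length \<alpha>" using r by simp
    have "cmod (ft_add c d \<alpha>) \<le> cmod (c \<alpha>) + cmod (d \<alpha>)" unfolding ft_add_def by (rule norm_triangle_ineq)
    then show "cmod (ft_add c d \<alpha>) * \<rho> ^ length \<alpha> \<le> cmod (c \<alpha>) * \<rho> ^ length \<alpha> + cmod (d \<alpha>) * \<rho> ^ length \<alpha>"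
      using r by (simp add: distrib_right[symmetric] mult_right_mono)
  qed
qed

lemma FT_smul: assumes "c \<in> FT n r" shows "ft_smul z c \<in> FT n r"
  unfolding FT_def mem_Collect_eq
proof (intro conjI allI impI)
  fix \<alpha> assume "\<alpha> \<notin> words n" then show "ft_smul z c \<alpha> = 0"
    using FT_zero[OF assms(1)] unfolding ft_smul_def by simp
next
  fix \<rho> :: real assume r: "0 < \<rho> \<and> \<rho> < r"
  have "(\<lambda>\<alpha>. cmod z * (cmod (c \<alpha>) * \<rho> ^ length \<alpha>)) summable_on words n"
    using assms r by (intro summable_on_cmult_right FT_summable) auto
  then show "(\<lambda>\<alpha>. cmod (ft_smul z c \<alpha>) * \<rho> ^ length \<alpha>) summable_on words n"
    unfolding ft_smul_def by (simp add: norm_mult mult.assoc)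
qed

lemma FT_finite:
  assumes "\<And>\<alpha>. \<alpha> \<notin> words n \<Longrightarrow> c \<alpha> = 0" "finite {\<alpha>. c \<alpha> \<noteq> 0}"
  shows "c \<in> FT n r"
  unfolding FT_def mem_Collect_eq
proof (intro conjI allI impI)
  fix \<alpha> assume "\<alpha> \<notin> words n" then show "c \<alpha> = 0" using assms by auto
next
  fix \<rho> :: real
  have "(\<lambda>\<alpha>. cmod (c \<alpha>) * \<rho> ^ length \<alpha>) summable_on {\<alpha>. c \<alpha> \<noteq> 0}"
    using assms(2) by (rule summable_on_finite)
  moreover have "((\<lambda>\<alpha>. cmod (c \<alpha>) * \<rho> ^ length \<alpha>) summable_on {\<alpha>. c \<alpha> \<noteq> 0}) =
      ((\<lambda>\<alpha>. cmod (c \<alpha>) * \<rho> ^ length \<alpha>) summable_on words n)"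
    by (rule summable_on_cong_neutral) (use assms(1) in auto)
  ultimately show "(\<lambda>\<alpha>. cmod (c \<alpha>) * \<rho> ^ length \<alpha>) summable_on words n" by simp
qed

definition ew :: "nat list \<Rightarrow> nat list \<Rightarrow> complex" where
  "ew \<alpha> = (\<lambda>\<beta>. if \<beta> = \<alpha> then 1 else 0)"

lemma ew_FT: "\<alpha> \<in> words n \<Longrightarrow> ew \<alpha> \<in> FT n r"
  by (rule FT_finite) (auto simp: ew_def)

lemma ft_gen_ew: "ft_gen i = ew [i]" unfolding ft_gen_def ew_def by simp
lemma ft_one_ew: "ft_one = ew []" unfolding ft_one_def ew_def by simp

lemma ft_gen_FT: "i < n \<Longrightarrow> ft_gen i \<in> FT n r"
  unfolding ft_gen_ew by (rule ew_FT) (simp add: words_def)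
lemma ft_one_FT: "ft_one \<in> FT n r"
  unfolding ft_one_ew by (rule ew_FT) (simp add: words_def)

lemma triangle_le:
  fixes x y :: "nat \<Rightarrow> real"
  assumes "\<And>i. 0 \<le> x i" "\<And>i. 0 \<le> y i"
  shows "(\<Sum>k<N. \<Sum>i\<le>k. x i * y (k - i)) \<le> (\<Sum>i<N. x i) * (\<Sum>j<N. y j)"
proof -
  have "(\<Sum>k<N. \<Sum>i\<le>k. x i * y (k - i)) = (\<Sum>(i, j)\<in>{(i, j). i + j < N}. x i * y j)"
    by (rule sum.triangle_reindex[symmetric])
  also have "\<dots> \<le> (\<Sum>(i, j)\<in>{..<N} \<times> {..<N}. x i * y j)"
    by (rule sum_mono2) (auto simp: assms)
  also have "\<dots> = (\<Sum>i<N. x i) * (\<Sum>j<N. y j)"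
    by (simp add: sum_product sum.cartesian_product)
  finally show ?thesis .
qed

lemma mk_mult:
  assumes "0 \<le> \<rho>"
  shows "mk n \<rho> (ft_mult c d) k \<le> (\<Sum>i\<le>k. mk n \<rho> c i * mk n \<rho> d (k - i))"
proof -
  have "mk n \<rho> (ft_mult c d) k = (\<Sum>\<gamma>\<in>wl n k. cmod (\<Sum>i\<le>k. c (take i \<gamma>) * d (drop i \<gamma>)) * \<rho> ^ k)"
    unfolding mk_def ft_mult_def by (intro sum.cong refl) (simp add: wl_def)
  also have "\<dots> \<le> (\<Sum>\<gamma>\<in>wl n k. \<Sum>i\<le>k. (cmod (c (take i \<gamma>)) * \<rho> ^ i) * (cmod (d (drop i \<gamma>)) * \<rho> ^ (k - i)))"
  proof (rule sum_mono)
    fix \<gamma> assume "\<gamma> \<in> wl n k"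
    have "cmod (\<Sum>i\<le>k. c (take i \<gamma>) * d (drop i \<gamma>)) * \<rho> ^ k \<le> (\<Sum>i\<le>k. cmod (c (take i \<gamma>) * d (drop i \<gamma>))) * \<rho> ^ k"
      using assms by (intro mult_right_mono norm_sum) auto
    also have "\<dots> = (\<Sum>i\<le>k. (cmod (c (take i \<gamma>)) * \<rho> ^ i) * (cmod (d (drop i \<gamma>)) * \<rho> ^ (k - i)))"
      unfolding sum_distrib_right
    proof (intro sum.cong refl)
      fix i assume "i \<in> {..k}"
      then have "\<rho> ^ k = \<rho> ^ i * \<rho> ^ (k - i)" by (simp add: power_add[symmetric])
      then show "cmod (c (take i \<gamma>) * d (drop i \<gamma>)) * \<rho> ^ k = cmod (c (take i \<gamma>)) * \<rho> ^ i * (cmod (d (drop i \<gamma>)) * \<rho> ^ (k - i))"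
        by (simp add: norm_mult)
    qed
    finally show "cmod (\<Sum>i\<le>k. c (take i \<gamma>) * d (drop i \<gamma>)) * \<rho> ^ k \<le> (\<Sum>i\<le>k. (cmod (c (take i \<gamma>)) * \<rho> ^ i) * (cmod (d (drop i \<gamma>)) * \<rho> ^ (k - i)))" .
  qed
  also have "\<dots> = (\<Sum>i\<le>k. \<Sum>\<gamma>\<in>wl n k. (cmod (c (take i \<gamma>)) * \<rho> ^ i) * (cmod (d (drop i \<gamma>)) * \<rho> ^ (k - i)))"
    by (rule sum.swap)
  also have "\<dots> = (\<Sum>i\<le>k. mk n \<rho> c i * mk n \<rho> d (k - i))"
  proof (intro sum.cong refl)
    fix i assume "i \<in> {..k}"
    then have "(\<Sum>\<gamma>\<in>wl n k. (cmod (c (take i \<gamma>)) * \<rho> ^ i) * (cmod (d (drop i \<gamma>)) * \<rho> ^ (k - i))) =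
       (\<Sum>\<beta>\<in>wl n i. \<Sum>\<delta>\<in>wl n (k - i). (cmod (c \<beta>) * \<rho> ^ i) * (cmod (d \<delta>) * \<rho> ^ (k - i)))"
      by (intro split_sum[where g = "\<lambda>\<beta> \<delta>. (cmod (c \<beta>) * \<rho> ^ i) * (cmod (d \<delta>) * \<rho> ^ (k - i))"]) simp
    also have "\<dots> = mk n \<rho> c i * mk n \<rho> d (k - i)"
      unfolding mk_def by (simp add: sum_product)
    finally show "(\<Sum>\<gamma>\<in>wl n k. (cmod (c (take i \<gamma>)) * \<rho> ^ i) * (cmod (d (drop i \<gamma>)) * \<rho> ^ (k - i))) = mk n \<rho> c i * mk n \<rho> d (k - i)" .
  qed
  finally show ?thesis .
qed

lemma ft_mult_zero: assumes "c \<in> FT n r" "d \<in> FT n r" "\<gamma> \<notin> words n" shows "ft_mult c d \<gamma> = 0"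
  unfolding ft_mult_def
proof (rule sum.neutral, rule ballI)
  fix k assume "k \<in> {..length \<gamma>}"
  have "take k \<gamma> \<notin> words n \<or> drop k \<gamma> \<notin> words n"
    using assms(3) words_append[of "take k \<gamma>" "drop k \<gamma>" n] by auto
  then show "c (take k \<gamma>) * d (drop k \<gamma>) = 0" using assms(1,2) FT_zero by auto
qed

lemma FT_mult: assumes c: "c \<in> FT n r" and d: "d \<in> FT n r" shows "ft_mult c d \<in> FT n r"
  unfolding FT_def mem_Collect_eq
proof (intro conjI allI impI)
  fix \<alpha> assume "\<alpha> \<notin> words n" then show "ft_mult c d \<alpha> = 0" using ft_mult_zero[OF c d] by blast
next
  fix \<rho> :: real assume r: "0 < \<rho> \<and> \<rho> < r"
  let ?h = "\<lambda>\<alpha>. cmod (ft_mult c d \<alpha>) * \<rho> ^ length \<alpha>"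
  show "?h summable_on words n"
  proof (rule nonneg_bdd_above_summable_on)
    show "\<And>x. x \<in> words n \<Longrightarrow> 0 \<le> ?h x" using r by simp
    show "bdd_above (sum ?h ` {F. F \<subseteq> words n \<and> finite F})"
    proof (rule bdd_aboveI2)
      fix F assume "F \<in> {F. F \<subseteq> words n \<and> finite F}"
      then have F: "F \<subseteq> words n" "finite F" by auto
      obtain N where N: "\<forall>\<alpha>\<in>F. length \<alpha> < N"
        using F(2) finite_nat_set_iff_bounded[of "length ` F"] by auto
      have sub: "F \<subseteq> (\<Union>k<N. wl n k)" using F(1) N unfolding wl_def by auto
      have "sum ?h F \<le> sum ?h (\<Union>k<N. wl n k)"
        using r sub by (intro sum_mono2) (auto simp: finite_wl)
      also have "\<dots> = (\<Sum>k<N. \<Sum>\<alpha>\<in>wl n k. ?h \<alpha>)" by (rule sum_wl_union[symmetric])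
      also have "\<dots> = (\<Sum>k<N. mk n \<rho> (ft_mult c d) k)"
        unfolding mk_def by (intro sum.cong refl) (auto simp: wl_def)
      also have "\<dots> \<le> (\<Sum>k<N. \<Sum>i\<le>k. mk n \<rho> c i * mk n \<rho> d (k - i))"
        using r by (intro sum_mono mk_mult) auto
      also have "\<dots> \<le> (\<Sum>i<N. mk n \<rho> c i) * (\<Sum>j<N. mk n \<rho> d j)"
        using r by (intro triangle_le mk_nonneg) auto
      also have "\<dots> \<le> ft_norm n \<rho> c * ft_norm n \<rho> d"
        using r mk_partial_le[OF c, of \<rho> N] mk_partial_le[OF d, of \<rho> N]
        by (intro mult_mono) (auto intro!: sum_nonneg mk_nonneg ft_norm_nonneg)
      finally show "sum ?h F \<le> ft_norm n \<rho> c * ft_norm n \<rho> d" .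
    qed
  qed
qed

lemma ft_norm_mono:
  assumes "c \<in> FT n r" "0 < \<rho>" "\<rho> \<le> \<rho>'" "\<rho>' < r"
  shows "ft_norm n \<rho> c \<le> ft_norm n \<rho>' c"
  unfolding ft_norm_def
  using assms by (intro infsum_mono FT_summable mult_left_mono power_mono) auto



lemma submult_bound:
  fixes M :: "nat \<Rightarrow> real"
  assumes nn: "\<And>d. 0 \<le> M d" and sub: "\<And>i j. M (i + j) \<le> M i * M j" and m: "0 < m"
    and K: "\<And>s. s < m \<Longrightarrow> M s \<le> K"
  shows "M d \<le> K * M m ^ (d div m)"
proof (induction d rule: less_induct)
  case (less d)
  show ?case
  proof (cases "d < m")
    case True then show ?thesis using K by simp
  next
    case False
    then have dm: "d = m + (d - m)" "d - m < d" using m by auto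
    have "M d \<le> M m * M (d - m)" using sub[of m "d - m"] dm(1) by simp
    also have "\<dots> \<le> M m * (K * M m ^ ((d - m) div m))"
      using less[OF dm(2)] nn by (intro mult_left_mono) auto
    also have "\<dots> = K * M m ^ (Suc ((d - m) div m))" by simp
    also have "Suc ((d - m) div m) = d div m"
    proof -
      have "(d - m + m) div m = Suc ((d - m) div m)" using m by simp
      then show ?thesis using False by simp
    qed
    finally show ?thesis .
  qed
qed

lemma fekete_ev:
  fixes M :: "nat \<Rightarrow> real"
  assumes nn: "\<And>d. 0 \<le> M d" and sub: "\<And>i j. M (i + j) \<le> M i * M j" and m: "0 < m"
    and t: "root m (M m) < t"
  shows "\<forall>\<^sub>F d in sequentially. root d (M d) \<le> t"
proof -
  let ?x = "root m (M m)"
  define K where "K = (\<Sum>s<m. M s) + 1"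
  have K: "M s \<le> K" if "s < m" for s
  proof -
    have "M s \<le> (\<Sum>s<m. M s)" using that nn by (intro member_le_sum) auto
    then show ?thesis unfolding K_def by simp
  qed
  have "0 \<le> (\<Sum>s<m. M s)" by (intro sum_nonneg) (use nn in auto)
  then have K0: "0 < K" unfolding K_def by linarith
  have x0: "0 \<le> ?x" using nn by (simp add: real_root_ge_zero)
  have t0: "0 < t" using x0 t by simp
  have Mm: "M m = ?x ^ m" using real_root_pow_pos2[OF m nn[of m]] by simp
  have bd: "M d \<le> K * ?x ^ (m * (d div m))" for d
  proof -
    have e: "M m ^ (d div m) = ?x ^ (m * (d div m))" by (subst Mm) (simp add: power_mult)
    show ?thesis using submult_bound[OF nn sub m K, of d] unfolding e .
  qed
  have key: "\<forall>\<^sub>F d in sequentially. M d \<le> t ^ d"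
  proof (cases "?x = 0")
    case True
    have "M d \<le> t ^ d" if "d \<ge> m" for d
    proof -
      have "d div m > 0" using that m by (simp add: div_greater_zero_iff)
      then have "m * (d div m) > 0" using m by simp
      then have z: "(0::real) ^ (m * (d div m)) = 0" by (rule zero_power)
      have "M d \<le> 0" using bd[of d] unfolding True z by simp
      then show ?thesis using t0 by (smt (verit) zero_le_power)
    qed
    then show ?thesis unfolding eventually_sequentially by blast
  next
    case False
    then have xp: "0 < ?x" using x0 by simp
    define q where "q = ?x / t"
    have q0: "0 < q" "q < 1" unfolding q_def using xp t t0 by (auto simp: field_simps)
    define \<tau> where "\<tau> = min 1 (t ^ m)"
    have tau0: "0 < \<tau>" unfolding \<tau>_def using t0 by simp
    have tau: "\<tau> \<le> t ^ s" if "s < m" for s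
    proof (cases "t \<le> 1")
      case True then have "t ^ m \<le> t ^ s" using that t0 by (intro power_decreasing) auto
      then show ?thesis unfolding \<tau>_def by simp
    next
      case False then have "1 \<le> t ^ s" by (intro one_le_power) auto
      then show ?thesis unfolding \<tau>_def by simp
    qed
    have lim: "(\<lambda>d. (K / q ^ m) * q ^ d) \<longlonglongrightarrow> (K / q ^ m) * 0"
      using q0 by (intro tendsto_intros LIMSEQ_power_zero) simp
    have "\<forall>\<^sub>F d in sequentially. (K / q ^ m) * q ^ d < \<tau>"
      using order_tendstoD(2)[OF lim] tau0 by simp
    then obtain D where D: "\<And>d. d \<ge> D \<Longrightarrow> (K / q ^ m) * q ^ d < \<tau>"
      unfolding eventually_sequentially by blast
    have "M d \<le> t ^ d" if "d \<ge> max D m" for d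
    proof -
      have dm: "d \<ge> m" "d \<ge> D" using that by auto
      let ?k = "m * (d div m)"
      have k1: "?k \<le> d" by simp
      have k2: "d - m \<le> ?k"
        using m by (metis minus_mod_eq_mult_div mod_less_divisor diff_le_mono2 less_imp_le mult.commute)
      have xq: "?x = q * t" unfolding q_def using t0 by simp
      have "M d \<le> K * (q ^ ?k * t ^ ?k)" using bd[of d] unfolding xq by (simp add: power_mult_distrib)
      also have "\<dots> \<le> K * (q ^ (d - m) * t ^ ?k)"
        using K0 t0 q0 k2 by (intro mult_left_mono mult_right_mono power_decreasing) auto
      also have "q ^ (d - m) = q ^ d / q ^ m" using q0 dm(1) by (simp add: power_diff)
      also have "K * (q ^ d / q ^ m * t ^ ?k) = ((K / q ^ m) * q ^ d) * t ^ ?k" by simp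
      also have "\<dots> \<le> \<tau> * t ^ ?k" using D[OF dm(2)] t0 by (intro mult_right_mono) auto
      also have "\<dots> \<le> t ^ (d - ?k) * t ^ ?k"
      proof -
        have "d - ?k = d mod m" by (rule minus_mult_div_eq_mod)
        then have "\<tau> \<le> t ^ (d - ?k)" using tau[of "d mod m"] m by simp
        then show ?thesis using t0 by (intro mult_right_mono) auto
      qed
      also have "\<dots> = t ^ d" using k1 by (simp add: power_add[symmetric])
      finally show ?thesis .
    qed
    then show ?thesis unfolding eventually_sequentially by blast
  qed
  have "\<forall>\<^sub>F d in sequentially. d > 0 \<and> M d \<le> t ^ d"
    using eventually_conj[OF eventually_gt_at_top[of "0::nat"] key] by simp
  then show ?thesis
  proof (rule eventually_mono)
    fix d assume "0 < d \<and> M d \<le> t ^ d"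
    then have "root d (M d) \<le> root d (t ^ d)" by (intro real_root_le_mono) auto
    also have "\<dots> = t" using \<open>0 < d \<and> _\<close> t0 by (simp add: real_root_power_cancel)
    finally show "root d (M d) \<le> t" .
  qed
qed

lemma fekete:
  fixes M :: "nat \<Rightarrow> real"
  assumes nn: "\<And>d. 0 \<le> M d" and sub: "\<And>i j. M (i + j) \<le> M i * M j"
  shows "convergent (\<lambda>d. root d (M d))"
proof -
  let ?x = "\<lambda>d. root d (M d)"
  define L where "L = Inf (?x ` {1..})"
  have bb: "bdd_below (?x ` {1..})" using nn by (intro bdd_belowI2[of _ 0]) (simp add: real_root_ge_zero)
  have ne: "?x ` {1..} \<noteq> {}" by simp
  have low: "L \<le> ?x d" if "d \<ge> 1" for d unfolding L_def using that bb by (intro cInf_lower) auto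
  have "?x \<longlonglongrightarrow> L"
  proof (rule order_tendstoI)
    fix a assume "a < L"
    then show "\<forall>\<^sub>F d in sequentially. a < ?x d"
      using low unfolding eventually_sequentially by (meson less_le_trans)
  next
    fix a assume "L < a"
    then obtain y where y: "y \<in> ?x ` {1..}" "y < a" using cInf_less_iff[OF ne bb] unfolding L_def by blast
    then obtain m where m: "m \<ge> 1" "?x m < a" by auto
    have m2: "root m (M m) < a" using m(2) by simp
    have "\<forall>\<^sub>F d in sequentially. ?x d \<le> (?x m + a) / 2"
      proof (rule fekete_ev[OF nn sub, of m])
      show "0 < m" using m(1) by simp
      show "root m (M m) < (root m (M m) + a) / 2" using m2 by simp
    qed
    then show "\<forall>\<^sub>F d in sequentially. ?x d < a"
    proof (rule eventually_mono)
      fix d assume "root d (M d) \<le> (root m (M m) + a) / 2"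
      moreover have "(root m (M m) + a) / 2 < a" using m2 by simp
      ultimately show "root d (M d) < a" by (rule le_less_trans)
    qed
  qed
  then show ?thesis by (rule convergentI)
qed



definition Md :: "nat \<Rightarrow> ('a::monoid_mult \<Rightarrow> real) \<Rightarrow> 'a list \<Rightarrow> nat \<Rightarrow> real" where
  "Md n p a d = Max (insert 0 {p (word_prod a \<alpha>) | \<alpha>. \<alpha> \<in> words n \<and> length \<alpha> = d})"

lemma ssc_Md: "ssc P n r a \<longleftrightarrow> (\<forall>p\<in>P. lim (\<lambda>d. root d (Md n p a d)) < r)"
  unfolding ssc_def Md_def ..

lemma Md_set: "{p (word_prod a \<alpha>) | \<alpha>. \<alpha> \<in> words n \<and> length \<alpha> = d} = (\<lambda>\<alpha>. p (word_prod a \<alpha>)) ` wl n d"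
  unfolding wl_def by auto

lemma Md_fin: "finite (insert 0 {p (word_prod a \<alpha>) | \<alpha>. \<alpha> \<in> words n \<and> length \<alpha> = d})"
  unfolding Md_set by (simp add: finite_wl)

lemma Md_ge: "\<alpha> \<in> words n \<Longrightarrow> p (word_prod a \<alpha>) \<le> Md n p a (length \<alpha>)"
  unfolding Md_def by (rule Max_ge[OF Md_fin]) auto

lemma Md_nonneg: "0 \<le> Md n p a d"
  unfolding Md_def by (rule Max_ge[OF Md_fin]) auto

lemma Md_le: "0 \<le> B \<Longrightarrow> (\<And>\<alpha>. \<alpha> \<in> words n \<Longrightarrow> length \<alpha> = d \<Longrightarrow> p (word_prod a \<alpha>) \<le> B) \<Longrightarrow> Md n p a d \<le> B"
  unfolding Md_def by (rule Max.boundedI[OF Md_fin]) auto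

context am begin

lemma Md_sub: assumes p: "p \<in> P" shows "Md n p a (i + j) \<le> Md n p a i * Md n p a j"
proof (rule Md_le)
  show "0 \<le> Md n p a i * Md n p a j" by (intro mult_nonneg_nonneg Md_nonneg)
  fix \<alpha> assume \<alpha>: "\<alpha> \<in> words n" "length \<alpha> = i + j"
  have "word_prod a \<alpha> = word_prod a (take i \<alpha>) * word_prod a (drop i \<alpha>)"
    by (simp add: word_prod_append[symmetric])
  then have "p (word_prod a \<alpha>) \<le> p (word_prod a (take i \<alpha>)) * p (word_prod a (drop i \<alpha>))"
    using sn_mult[OF p] by simp
  also have "\<dots> \<le> Md n p a i * Md n p a j"
  proof (rule mult_mono)
    show "p (word_prod a (take i \<alpha>)) \<le> Md n p a i"
      using Md_ge[OF words_take[OF \<alpha>(1)], of p a i] \<alpha>(2) by simp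
    show "p (word_prod a (drop i \<alpha>)) \<le> Md n p a j"
      using Md_ge[OF words_drop[OF \<alpha>(1)], of p a i] \<alpha>(2) by simp
  qed (auto intro: Md_nonneg sn_nonneg[OF p])
  finally show "p (word_prod a \<alpha>) \<le> Md n p a i * Md n p a j" .
qed

lemma Md_conv: "p \<in> P \<Longrightarrow> (\<lambda>d. root d (Md n p a d)) \<longlonglongrightarrow> lim (\<lambda>d. root d (Md n p a d))"
  using fekete[of "Md n p a", OF Md_nonneg Md_sub] by (simp add: convergent_LIMSEQ_iff)

lemma ssc_bound:
  assumes p: "p \<in> P" and L: "lim (\<lambda>d. root d (Md n p a d)) < r"
  shows "\<exists>\<rho> C. 0 < \<rho> \<and> \<rho> < r \<and> 0 \<le> C \<and> (\<forall>\<alpha>\<in>words n. p (word_prod a \<alpha>) \<le> C * \<rho> ^ length \<alpha>)"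
proof -
  let ?x = "\<lambda>d. root d (Md n p a d)"
  let ?L = "lim ?x"
  have t: "?x \<longlonglongrightarrow> ?L" by (rule Md_conv[OF p])
  have L0: "0 \<le> ?L"
    by (rule LIMSEQ_le_const[OF t]) (auto intro: real_root_ge_zero Md_nonneg)
  define \<rho> where "\<rho> = (?L + r) / 2"
  have r: "0 < \<rho>" "\<rho> < r" using L L0 unfolding \<rho>_def by auto
  obtain D where D: "\<And>d. d \<ge> D \<Longrightarrow> ?x d < \<rho>"
    using order_tendstoD(2)[OF t, of \<rho>] r L unfolding \<rho>_def eventually_sequentially by auto
  define C where "C = (\<Sum>d<Suc D. Md n p a d / \<rho> ^ d) + 1"
  have C1: "1 \<le> C" unfolding C_def using r by (simp add: sum_nonneg Md_nonneg)
  have bd: "Md n p a d \<le> C * \<rho> ^ d" for d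
  proof (cases "d \<le> D")
    case True
    have "Md n p a d / \<rho> ^ d \<le> (\<Sum>d<Suc D. Md n p a d / \<rho> ^ d)"
      using True r by (intro member_le_sum) (auto simp: Md_nonneg)
    then have "Md n p a d / \<rho> ^ d \<le> C" unfolding C_def by simp
    then show ?thesis using r by (simp add: divide_le_eq)
  next
    case False
    then have d: "d > 0" "d \<ge> D" by auto
    have "Md n p a d = ?x d ^ d" using real_root_pow_pos2[OF d(1) Md_nonneg[of n p a d]] by simp
    also have "\<dots> \<le> \<rho> ^ d" using D[OF d(2)] by (intro power_mono) (auto simp: real_root_ge_zero Md_nonneg)
    also have "\<dots> \<le> C * \<rho> ^ d" using C1 r by simp
    finally show ?thesis .
  qed
  show ?thesis
  proof (intro exI conjI ballI)
    show "0 < \<rho>" "\<rho> < r" "0 \<le> C" using r C1 by auto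
    fix \<alpha> assume "\<alpha> \<in> words n"
    then show "p (word_prod a \<alpha>) \<le> C * \<rho> ^ length \<alpha>" using Md_ge bd order_trans by blast
  qed
qed

lemma bound_ssc:
  assumes p: "p \<in> P" and r: "0 < \<rho>" "\<rho> < r"
    and b: "\<And>\<alpha>. \<alpha> \<in> words n \<Longrightarrow> p (word_prod a \<alpha>) \<le> C * \<rho> ^ length \<alpha>"
  shows "lim (\<lambda>d. root d (Md n p a d)) < r"
proof -
  let ?x = "\<lambda>d. root d (Md n p a d)"
  define C' where "C' = max C 1"
  have C': "0 < C'" unfolding C'_def by simp
  have bd: "Md n p a d \<le> C' * \<rho> ^ d" for d
  proof (rule Md_le)
    show "0 \<le> C' * \<rho> ^ d" using C' r by simp
    fix \<alpha> assume "\<alpha> \<in> words n" "length \<alpha> = d"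
    then have "p (word_prod a \<alpha>) \<le> C * \<rho> ^ d" using b by auto
    also have "\<dots> \<le> C' * \<rho> ^ d" unfolding C'_def using r by (intro mult_right_mono) auto
    finally show "p (word_prod a \<alpha>) \<le> C' * \<rho> ^ d" .
  qed
  have t2: "(\<lambda>d. root d C' * \<rho>) \<longlonglongrightarrow> 1 * \<rho>"
    by (intro tendsto_intros LIMSEQ_root_const C')
  have "lim ?x \<le> 1 * \<rho>"
  proof (rule LIMSEQ_le[OF Md_conv[OF p] t2])
    show "\<exists>N. \<forall>d\<ge>N. ?x d \<le> root d C' * \<rho>"
    proof (intro exI allI impI)
      fix d :: nat assume "d \<ge> 1"
      then have "?x d \<le> root d (C' * \<rho> ^ d)" using bd by (intro real_root_le_mono) auto
      also have "\<dots> = root d C' * \<rho>" using \<open>d \<ge> 1\<close> r by (simp add: real_root_mult real_root_power_cancel)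
      finally show "?x d \<le> root d C' * \<rho>" .
    qed
  qed
  then show ?thesis using r by simp
qed

end


locale amt = am smul P for smul :: "complex \<Rightarrow> 'a::ring_1 \<Rightarrow> 'a" and P +
  fixes n :: nat and r :: real and a :: "'a list"
  assumes len: "length a = n" and ssca: "ssc P n r a" and r0: "0 < r"
begin

definition u :: "nat \<Rightarrow> (nat list \<Rightarrow> complex) \<Rightarrow> 'a" where
  "u k c = (\<Sum>\<alpha>\<in>wl n k. smul (c \<alpha>) (word_prod a \<alpha>))"

definition s :: "nat \<Rightarrow> (nat list \<Rightarrow> complex) \<Rightarrow> 'a" where
  "s N c = (\<Sum>k<N. u k c)"

definition gam :: "(nat list \<Rightarrow> complex) \<Rightarrow> 'a" where
  "gam c = (if c \<in> FT n r then (THE x. conv (\<lambda>N. s N c) x) else undefined)"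

lemma bnd: "p \<in> P \<Longrightarrow> \<exists>\<rho> C. 0 < \<rho> \<and> \<rho> < r \<and> 0 \<le> C \<and> (\<forall>\<alpha>\<in>words n. p (word_prod a \<alpha>) \<le> C * \<rho> ^ length \<alpha>)"
  using ssc_bound ssca unfolding ssc_Md by blast

lemma u_bound:
  assumes p: "p \<in> P" and b: "\<forall>\<alpha>\<in>words n. p (word_prod a \<alpha>) \<le> C * \<rho> ^ length \<alpha>"
  shows "p (u k c) \<le> C * mk n \<rho> c k"
proof -
  have "p (u k c) \<le> (\<Sum>\<alpha>\<in>wl n k. p (smul (c \<alpha>) (word_prod a \<alpha>)))"
    unfolding u_def by (rule sn_sum[OF p])
  also have "\<dots> = (\<Sum>\<alpha>\<in>wl n k. cmod (c \<alpha>) * p (word_prod a \<alpha>))" by (simp add: sn_smul[OF p])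
  also have "\<dots> \<le> (\<Sum>\<alpha>\<in>wl n k. cmod (c \<alpha>) * (C * \<rho> ^ k))"
    using b by (intro sum_mono mult_left_mono) (auto simp: wl_def)
  also have "\<dots> = C * mk n \<rho> c k" unfolding mk_def by (simp add: sum_distrib_left mult_ac)
  finally show ?thesis .
qed

lemma s_diff: "N \<le> M \<Longrightarrow> s M c - s N c = (\<Sum>k\<in>{N..<M}. u k c)"
  unfolding s_def using sum.atLeastLessThan_concat[of 0 N M "\<lambda>k. u k c"]
  by (simp add: atLeast0LessThan algebra_simps)

lemma s_conv_ex: assumes c: "c \<in> FT n r" shows "\<exists>x. conv (\<lambda>N. s N c) x"
proof (rule conv_cauchy)
  fix p and e :: real assume p: "p \<in> P" and e: "0 < e"
  obtain \<rho> C where \<rho>: "0 < \<rho>" "\<rho> < r" "0 \<le> C" and b: "\<forall>\<alpha>\<in>words n. p (word_prod a \<alpha>) \<le> C * \<rho> ^ length \<alpha>"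
    using bnd[OF p] by blast
  have sm: "summable (mk n \<rho> c)" using mk_summable[OF c \<rho>(1,2)] by simp
  obtain N0 where N0: "\<forall>m\<ge>N0. \<forall>M. norm (sum (mk n \<rho> c) {m..<M}) < e / (C + 1)"
  proof -
    have "0 < e / (C + 1)" using e \<rho>(3) by simp
    then show ?thesis using sm[unfolded summable_Cauchy] that by blast
  qed
  have main: "p (s M c - s N c) < e" if "N0 \<le> N" "N \<le> M" for N M
  proof -
    have "p (s M c - s N c) \<le> (\<Sum>k\<in>{N..<M}. p (u k c))" unfolding s_diff[OF that(2)] by (rule sn_sum[OF p])
    also have "\<dots> \<le> (\<Sum>k\<in>{N..<M}. C * mk n \<rho> c k)" by (intro sum_mono u_bound[OF p b])
    also have "\<dots> = C * sum (mk n \<rho> c) {N..<M}" by (simp add: sum_distrib_left)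
    also have "\<dots> \<le> C * (e / (C + 1))"
    proof -
      have "norm (sum (mk n \<rho> c) {N..<M}) < e / (C + 1)" using N0 that(1) by blast
      then have "sum (mk n \<rho> c) {N..<M} \<le> e / (C + 1)" by simp
      then show ?thesis using \<rho>(3) by (intro mult_left_mono)
    qed
    also have "\<dots> < e" using e \<rho>(3) by (simp add: field_simps)
    finally show ?thesis .
  qed
  show "\<exists>N0. \<forall>N\<ge>N0. \<forall>M\<ge>N0. p (s N c - s M c) < e"
  proof (intro exI allI impI)
    fix N M assume "N0 \<le> N" "N0 \<le> M"
    then show "p (s N c - s M c) < e"
      using main[of M N] main[of N M] sn_diff_sym[OF p, of "s N c" "s M c"] by (cases "M \<le> N") auto
  qed
qed

lemma gam_conv: "c \<in> FT n r \<Longrightarrow> conv (\<lambda>N. s N c) (gam c)"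
  unfolding gam_def using s_conv_ex[of c] conv_unique by (auto intro: theI2)

lemma gam_eq: "c \<in> FT n r \<Longrightarrow> conv (\<lambda>N. s N c) x \<Longrightarrow> gam c = x"
  using gam_conv conv_unique by blast

lemma gam_ext: "gam \<in> extensional (FT n r)"
  unfolding gam_def extensional_def by auto

lemma u_add: "u k (ft_add c d) = u k c + u k d"
  unfolding u_def ft_add_def by (simp add: smul_add_left sum.distrib)

lemma s_add: "s N (ft_add c d) = s N c + s N d"
  unfolding s_def u_add by (simp add: sum.distrib)

lemma gam_add: "c \<in> FT n r \<Longrightarrow> d \<in> FT n r \<Longrightarrow> gam (ft_add c d) = gam c + gam d"
  by (rule gam_eq[OF FT_add]) (auto simp: s_add intro: conv_add gam_conv)

lemma u_smul: "u k (ft_smul z c) = smul z (u k c)"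
  unfolding u_def ft_smul_def by (simp add: smul_sum_right smul_assoc)

lemma s_smul: "s N (ft_smul z c) = smul z (s N c)"
  unfolding s_def u_smul by (simp add: smul_sum_right)

lemma gam_smul: "c \<in> FT n r \<Longrightarrow> gam (ft_smul z c) = smul z (gam c)"
  by (rule gam_eq[OF FT_smul]) (auto simp: s_smul intro: conv_smul gam_conv)

lemma u_ew: assumes "\<beta> \<in> words n" shows "u k (ew \<beta>) = (if k = length \<beta> then word_prod a \<beta> else 0)"
proof -
  have "u k (ew \<beta>) = (\<Sum>\<alpha>\<in>wl n k. if \<alpha> = \<beta> then word_prod a \<alpha> else 0)"
    unfolding u_def ew_def by (intro sum.cong refl) (simp add: smul_one)
  also have "\<dots> = (if \<beta> \<in> wl n k then word_prod a \<beta> else 0)" by (simp add: sum.delta finite_wl)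
  finally show ?thesis using assms unfolding wl_def by auto
qed

lemma gam_ew: assumes "\<beta> \<in> words n" shows "gam (ew \<beta>) = word_prod a \<beta>"
proof (rule gam_eq[OF ew_FT[OF assms]])
  have "s N (ew \<beta>) = word_prod a \<beta>" if "N \<ge> Suc (length \<beta>)" for N
  proof -
    have "s N (ew \<beta>) = (\<Sum>k<N. if k = length \<beta> then word_prod a \<beta> else 0)"
      unfolding s_def u_ew[OF assms] ..
    also have "\<dots> = word_prod a \<beta>" using that by (simp add: sum.delta)
    finally show ?thesis .
  qed
  then show "conv (\<lambda>N. s N (ew \<beta>)) (word_prod a \<beta>)"
    by (intro conv_cong_ev[OF conv_const]) auto
qed

lemma gam_cont: assumes p: "p \<in> P"
  shows "\<exists>\<rho>. 0 < \<rho> \<and> \<rho> < r \<and> (\<exists>C. \<forall>c\<in>FT n r. p (gam c) \<le> C * ft_norm n \<rho> c)"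
proof -
  obtain \<rho> C where \<rho>: "0 < \<rho>" "\<rho> < r" "0 \<le> C" and b: "\<forall>\<alpha>\<in>words n. p (word_prod a \<alpha>) \<le> C * \<rho> ^ length \<alpha>"
    using bnd[OF p] by blast
  have "p (gam c) \<le> C * ft_norm n \<rho> c" if c: "c \<in> FT n r" for c
  proof (rule conv_bound[OF gam_conv[OF c] p])
    fix N
    have "p (s N c) \<le> (\<Sum>k<N. p (u k c))" unfolding s_def by (rule sn_sum[OF p])
    also have "\<dots> \<le> (\<Sum>k<N. C * mk n \<rho> c k)" by (intro sum_mono u_bound[OF p b])
    also have "\<dots> = C * (\<Sum>k<N. mk n \<rho> c k)" by (simp add: sum_distrib_left)
    also have "\<dots> \<le> C * ft_norm n \<rho> c" using mk_partial_le[OF c \<rho>(1,2)] \<rho>(3) by (intro mult_left_mono)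
    finally show "p (s N c) \<le> C * ft_norm n \<rho> c" .
  qed
  then show ?thesis using \<rho> by blast
qed

end


context amt begin

lemma u_mult: "u k (ft_mult c d) = (\<Sum>i\<le>k. u i c * u (k - i) d)"
proof -
  have "u k (ft_mult c d) = (\<Sum>\<gamma>\<in>wl n k. \<Sum>i\<le>k. smul (c (take i \<gamma>) * d (drop i \<gamma>)) (word_prod a \<gamma>))"
    unfolding u_def ft_mult_def by (intro sum.cong refl) (simp add: wl_def smul_sum_left)
  also have "\<dots> = (\<Sum>i\<le>k. \<Sum>\<gamma>\<in>wl n k. smul (c (take i \<gamma>) * d (drop i \<gamma>)) (word_prod a \<gamma>))"
    by (rule sum.swap)
  also have "\<dots> = (\<Sum>i\<le>k. u i c * u (k - i) d)"
  proof (intro sum.cong refl)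
    fix i assume i: "i \<in> {..k}"
    have "(\<Sum>\<gamma>\<in>wl n k. smul (c (take i \<gamma>) * d (drop i \<gamma>)) (word_prod a \<gamma>)) =
          (\<Sum>\<gamma>\<in>wl n k. (\<lambda>\<beta> \<delta>. smul (c \<beta>) (word_prod a \<beta>) * smul (d \<delta>) (word_prod a \<delta>)) (take i \<gamma>) (drop i \<gamma>))"
    proof (intro sum.cong refl)
      fix \<gamma>
      have "word_prod a \<gamma> = word_prod a (take i \<gamma>) * word_prod a (drop i \<gamma>)"
        by (simp add: word_prod_append[symmetric])
      then show "smul (c (take i \<gamma>) * d (drop i \<gamma>)) (word_prod a \<gamma>) =
        (\<lambda>\<beta> \<delta>. smul (c \<beta>) (word_prod a \<beta>) * smul (d \<delta>) (word_prod a \<delta>)) (take i \<gamma>) (drop i \<gamma>)"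
        by (simp add: smul_mult_both)
    qed
    also have "\<dots> = (\<Sum>\<beta>\<in>wl n i. \<Sum>\<delta>\<in>wl n (k - i). smul (c \<beta>) (word_prod a \<beta>) * smul (d \<delta>) (word_prod a \<delta>))"
      using i by (intro split_sum) simp
    also have "\<dots> = u i c * u (k - i) d" unfolding u_def by (simp add: sum_product)
    finally show "(\<Sum>\<gamma>\<in>wl n k. smul (c (take i \<gamma>) * d (drop i \<gamma>)) (word_prod a \<gamma>)) = u i c * u (k - i) d" .
  qed
  finally show ?thesis .
qed

lemma s_mult_box: "s N c * s N d = (\<Sum>(i, j)\<in>{..<N} \<times> {..<N}. u i c * u j d)"
  unfolding s_def by (simp add: sum_product sum.cartesian_product)

lemma s_mult_tri: "s N (ft_mult c d) = (\<Sum>(i, j)\<in>{(i, j). i + j < N}. u i c * u j d)"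
  unfolding s_def u_mult by (rule sum.triangle_reindex[symmetric])

lemma tri_sub: "{(i, j). i + j < N} \<subseteq> {..<N} \<times> {..<(N::nat)}" by auto
lemma tri_fin: "finite ({..<N} \<times> {..<(N::nat)})" by simp

lemma gam_mult:
  assumes c: "c \<in> FT n r" and d: "d \<in> FT n r"
  shows "gam (ft_mult c d) = gam c * gam d"
proof -
  have cd: "ft_mult c d \<in> FT n r" by (rule FT_mult[OF c d])
  have X: "conv (\<lambda>N. s N c * s N d) (gam c * gam d)" by (intro conv_mult gam_conv c d)
  have "conv (\<lambda>N. s N (ft_mult c d)) (gam c * gam d)"
  proof (rule conv_null[OF X])
    fix p assume p: "p \<in> P"
    obtain \<rho> C where \<rho>: "0 < \<rho>" "\<rho> < r" "0 \<le> C" and b: "\<forall>\<alpha>\<in>words n. p (word_prod a \<alpha>) \<le> C * \<rho> ^ length \<alpha>"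
      using bnd[OF p] by blast
    let ?x = "mk n \<rho> c" and ?y = "mk n \<rho> d"
    have x0: "\<And>i. 0 \<le> ?x i" and y0: "\<And>i. 0 \<le> ?y i" using \<rho> by (auto intro: mk_nonneg)
    have sx: "summable ?x" and sy: "summable ?y" using mk_summable c d \<rho> by auto
    have sxn: "summable (\<lambda>k. norm (?x k))" and syn: "summable (\<lambda>k. norm (?y k))"
      using sx sy x0 y0 by simp_all
    let ?B = "\<lambda>N. (\<Sum>(i, j)\<in>{..<N} \<times> {..<N}. ?x i * ?y j)"
    let ?T = "\<lambda>N. (\<Sum>(i, j)\<in>{(i, j). i + j < N}. ?x i * ?y j)"
    have B: "?B \<longlonglongrightarrow> suminf ?x * suminf ?y"
    proof -
      have "?B N = (\<Sum>i<N. ?x i) * (\<Sum>j<N. ?y j)" for N by (simp add: sum_product sum.cartesian_product)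
      moreover have "(\<lambda>N. (\<Sum>i<N. ?x i) * (\<Sum>j<N. ?y j)) \<longlonglongrightarrow> suminf ?x * suminf ?y"
        by (intro tendsto_mult summable_LIMSEQ sx sy)
      ultimately show ?thesis by simp
    qed
    have T: "?T \<longlonglongrightarrow> suminf ?x * suminf ?y"
    proof -
      have "?T N = (\<Sum>k<N. \<Sum>i\<le>k. ?x i * ?y (k - i))" for N by (rule sum.triangle_reindex)
      moreover have "(\<lambda>N. (\<Sum>k<N. \<Sum>i\<le>k. ?x i * ?y (k - i))) \<longlonglongrightarrow> suminf ?x * suminf ?y"
        using Cauchy_product_sums[OF sxn syn] unfolding sums_def .
      ultimately show ?thesis by simp
    qed
    have lim0: "(\<lambda>N. C * C * (?B N - ?T N)) \<longlonglongrightarrow> C * C * (suminf ?x * suminf ?y - suminf ?x * suminf ?y)"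
      by (intro tendsto_intros B T)
    show "(\<lambda>N. p (s N (ft_mult c d) - s N c * s N d)) \<longlonglongrightarrow> 0"
    proof (rule null_le[OF _ _ lim0[simplified]])
      fix N show "0 \<le> p (s N (ft_mult c d) - s N c * s N d)" by (rule sn_nonneg[OF p])
      have e: "s N c * s N d - s N (ft_mult c d) = (\<Sum>(i, j)\<in>{..<N} \<times> {..<N} - {(i, j). i + j < N}. u i c * u j d)"
        unfolding s_mult_box s_mult_tri by (rule sum_diff[OF tri_fin tri_sub, symmetric])
      have "p (s N (ft_mult c d) - s N c * s N d) = p (s N c * s N d - s N (ft_mult c d))"
        by (rule sn_diff_sym[OF p])
      also have "\<dots> \<le> (\<Sum>(i, j)\<in>{..<N} \<times> {..<N} - {(i, j). i + j < N}. p (u i c * u j d))"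
        unfolding e by (rule order_trans[OF sn_sum[OF p]]) (simp add: case_prod_unfold)
      also have "\<dots> \<le> (\<Sum>(i, j)\<in>{..<N} \<times> {..<N} - {(i, j). i + j < N}. C * C * (?x i * ?y j))"
      proof (rule sum_mono)
        fix ij assume "ij \<in> {..<N} \<times> {..<N} - {(i, j). i + j < N}"
        obtain i j where ij: "ij = (i, j)" by force
        have "p (u i c * u j d) \<le> p (u i c) * p (u j d)" by (rule sn_mult[OF p])
        also have "\<dots> \<le> (C * ?x i) * (C * ?y j)"
          by (intro mult_mono u_bound[OF p b] sn_nonneg[OF p]) (use \<rho> x0 in auto)
        finally show "(case ij of (i, j) \<Rightarrow> p (u i c * u j d)) \<le> (case ij of (i, j) \<Rightarrow> C * C * (?x i * ?y j))"
          unfolding ij by (simp add: mult_ac)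
      qed
      also have "\<dots> = C * C * (\<Sum>(i, j)\<in>{..<N} \<times> {..<N} - {(i, j). i + j < N}. ?x i * ?y j)"
        by (simp add: sum_distrib_left case_prod_unfold)
      also have "\<dots> = C * C * (?B N - ?T N)"
        by (simp only: sum_diff[OF tri_fin tri_sub])
      finally show "p (s N (ft_mult c d) - s N c * s N d) \<le> C * C * (?B N - ?T N)" .
    qed
  qed
  then show ?thesis by (rule gam_eq[OF cd])
qed

end


lemma ew_cons: "ft_mult (ft_gen i) (ew \<beta>) = ew (i # \<beta>)"
proof
  fix \<gamma>
  show "ft_mult (ft_gen i) (ew \<beta>) \<gamma> = ew (i # \<beta>) \<gamma>"
  proof (cases \<gamma>)
    case Nil then show ?thesis by (simp add: ft_mult_def ft_gen_def ew_def)
  next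
    case (Cons x \<gamma>')
    have "ft_mult (ft_gen i) (ew \<beta>) \<gamma> = (\<Sum>k\<le>Suc (length \<gamma>'). ft_gen i (take k (x # \<gamma>')) * ew \<beta> (drop k (x # \<gamma>')))"
      unfolding ft_mult_def Cons by simp
    also have "\<dots> = ft_gen i [] * ew \<beta> (x # \<gamma>') + (\<Sum>k\<le>length \<gamma>'. ft_gen i (x # take k \<gamma>') * ew \<beta> (drop k \<gamma>'))"
      by (subst sum.atMost_Suc_shift) simp
    also have "\<dots> = (\<Sum>k\<le>length \<gamma>'. if k = 0 then (if x = i then ew \<beta> \<gamma>' else 0) else 0)"
    proof -
      have "ft_gen i [] = 0" by (simp add: ft_gen_def)
      moreover have "(\<Sum>k\<le>length \<gamma>'. ft_gen i (x # take k \<gamma>') * ew \<beta> (drop k \<gamma>')) =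
         (\<Sum>k\<le>length \<gamma>'. if k = 0 then (if x = i then ew \<beta> \<gamma>' else 0) else 0)"
        by (intro sum.cong refl) (auto simp: ft_gen_def)
      ultimately show ?thesis by simp
    qed
    also have "\<dots> = (if x = i then ew \<beta> \<gamma>' else 0)" by (simp add: sum.delta)
    also have "\<dots> = ew (i # \<beta>) \<gamma>" unfolding Cons ew_def by auto
    finally show ?thesis .
  qed
qed

definition trunc :: "(nat list \<Rightarrow> complex) \<Rightarrow> nat list set \<Rightarrow> nat list \<Rightarrow> complex" where
  "trunc c F = (\<lambda>\<beta>. if \<beta> \<in> F then c \<beta> else 0)"

lemma trunc_FT: "finite F \<Longrightarrow> F \<subseteq> words n \<Longrightarrow> trunc c F \<in> FT n r"
  by (rule FT_finite) (auto simp: trunc_def intro: finite_subset[of _ F])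

lemma ft_norm_ew: "\<alpha> \<in> words n \<Longrightarrow> ft_norm n \<rho> (ew \<alpha>) = \<rho> ^ length \<alpha>"
proof -
  assume a: "\<alpha> \<in> words n"
  have "ft_norm n \<rho> (ew \<alpha>) = infsum (\<lambda>\<beta>. cmod (ew \<alpha> \<beta>) * \<rho> ^ length \<beta>) {\<alpha>}"
    unfolding ft_norm_def by (rule infsum_cong_neutral) (use a in \<open>auto simp: ew_def\<close>)
  then show ?thesis by (simp add: ew_def)
qed

context am begin

lemma hom_ew:
  assumes h: "\<phi> \<in> ft_cont_homs smul P n r"
  shows "\<alpha> \<in> words n \<Longrightarrow> \<phi> (ew \<alpha>) = word_prod (map (\<lambda>i. \<phi> (ft_gen i)) [0..<n]) \<alpha>"
proof (induction \<alpha>)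
  case Nil
  then show ?case using h unfolding ft_cont_homs_def by (simp add: ft_one_ew[symmetric])
next
  case (Cons i \<beta>)
  have i: "i < n" and \<beta>: "\<beta> \<in> words n" using Cons.prems by (auto simp: words_def)
  have "\<phi> (ew (i # \<beta>)) = \<phi> (ft_mult (ft_gen i) (ew \<beta>))" by (simp add: ew_cons)
  also have "\<dots> = \<phi> (ft_gen i) * \<phi> (ew \<beta>)"
    using h ft_gen_FT[OF i] ew_FT[OF \<beta>] unfolding ft_cont_homs_def by blast
  finally show ?case using Cons.IH[OF \<beta>] i by (simp add: word_prod_Cons)
qed

lemma hom_zero:
  assumes h: "\<phi> \<in> ft_cont_homs smul P n r"
  shows "\<phi> (\<lambda>\<beta>. 0) = 0"
proof -
  have "(\<lambda>\<beta>. 0) = ft_smul 0 ft_one" by (simp add: ft_smul_def)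
  then show ?thesis using h ft_one_FT unfolding ft_cont_homs_def by auto
qed

lemma hom_trunc:
  assumes h: "\<phi> \<in> ft_cont_homs smul P n r"
  shows "finite F \<Longrightarrow> F \<subseteq> words n \<Longrightarrow> \<phi> (trunc c F) = (\<Sum>\<alpha>\<in>F. smul (c \<alpha>) (\<phi> (ew \<alpha>)))"
proof (induction F rule: finite_induct)
  case empty
  then show ?case using hom_zero[OF h] by (simp add: trunc_def)
next
  case (insert x F)
  have e: "trunc c (insert x F) = ft_add (ft_smul (c x) (ew x)) (trunc c F)"
    using insert.hyps(2) by (auto simp: trunc_def ft_add_def ft_smul_def ew_def)
  have x: "x \<in> words n" and F: "F \<subseteq> words n" using insert.prems by auto
  have m1: "ft_smul (c x) (ew x) \<in> FT n r" by (intro FT_smul ew_FT x)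
  have m2: "trunc c F \<in> FT n r" by (intro trunc_FT insert.hyps F)
  have "\<phi> (trunc c (insert x F)) = \<phi> (ft_smul (c x) (ew x)) + \<phi> (trunc c F)"
    unfolding e using h m1 m2 unfolding ft_cont_homs_def by blast
  also have "\<phi> (ft_smul (c x) (ew x)) = smul (c x) (\<phi> (ew x))"
    using h ew_FT[OF x] unfolding ft_cont_homs_def by blast
  finally show ?case using insert.IH[OF F] insert.hyps by simp
qed

lemma hom_cont:
  assumes h: "\<phi> \<in> ft_cont_homs smul P n r" and p: "p \<in> P"
  shows "\<exists>\<rho> C. 0 < \<rho> \<and> \<rho> < r \<and> 0 \<le> C \<and> (\<forall>\<rho>'. \<rho> \<le> \<rho>' \<and> \<rho>' < r \<longrightarrow> (\<forall>c\<in>FT n r. p (\<phi> c) \<le> C * ft_norm n \<rho>' c))"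
proof -
  obtain \<rho> C where \<rho>: "0 < \<rho>" "\<rho> < r" and C: "\<forall>c\<in>FT n r. p (\<phi> c) \<le> C * ft_norm n \<rho> c"
    using h p unfolding ft_cont_homs_def by blast
  have "p (\<phi> c) \<le> max C 0 * ft_norm n \<rho>' c" if "\<rho> \<le> \<rho>'" "\<rho>' < r" "c \<in> FT n r" for \<rho>' c
  proof -
    have "p (\<phi> c) \<le> C * ft_norm n \<rho> c" using C that by blast
    also have "\<dots> \<le> max C 0 * ft_norm n \<rho> c" using \<rho> by (intro mult_right_mono ft_norm_nonneg) auto
    also have "\<dots> \<le> max C 0 * ft_norm n \<rho>' c" using \<rho> that by (intro mult_left_mono ft_norm_mono) auto
    finally show ?thesis .
  qed
  then show ?thesis using \<rho> by (intro exI[of _ \<rho>] exI[of _ "max C 0"]) auto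
qed

end

definition Wlt :: "nat \<Rightarrow> nat \<Rightarrow> nat list set" where
  "Wlt n N = {\<alpha>\<in>words n. length \<alpha> < N}"

lemma Wlt_fin: "finite (Wlt n N)"
proof -
  have "Wlt n N = (\<Union>k<N. wl n k)" unfolding Wlt_def wl_def by auto
  then show ?thesis by (simp add: finite_wl)
qed

lemma tail_FT: "c \<in> FT n r \<Longrightarrow> ft_add c (ft_smul (-1) (trunc c (Wlt n N))) \<in> FT n r"
  by (intro FT_add FT_smul trunc_FT Wlt_fin) (auto simp: Wlt_def)

lemma tail_bound:
  assumes c: "c \<in> FT n r" and r: "0 < \<rho>" "\<rho> < \<rho>'" "\<rho>' < r"
  shows "ft_norm n \<rho> (ft_add c (ft_smul (-1) (trunc c (Wlt n N)))) \<le> (\<rho> / \<rho>') ^ N * ft_norm n \<rho>' c"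
proof -
  let ?d = "ft_add c (ft_smul (-1) (trunc c (Wlt n N)))"
  let ?q = "\<rho> / \<rho>'"
  have q: "0 < ?q" "?q < 1" using r by auto
  have dv: "?d \<beta> = (if \<beta> \<in> Wlt n N then 0 else c \<beta>)" for \<beta>
    by (simp add: ft_add_def ft_smul_def trunc_def)
  have "ft_norm n \<rho> ?d \<le> (\<Sum>\<^sub>\<infinity>\<beta>\<in>words n. ?q ^ N * (cmod (c \<beta>) * \<rho>' ^ length \<beta>))"
    unfolding ft_norm_def
  proof (rule infsum_mono)
    show "(\<lambda>\<beta>. cmod (?d \<beta>) * \<rho> ^ length \<beta>) summable_on words n"
      using FT_summable[OF tail_FT[OF c] r(1)] r by simp
    show "(\<lambda>\<beta>. ?q ^ N * (cmod (c \<beta>) * \<rho>' ^ length \<beta>)) summable_on words n"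
      using FT_summable[OF c, of \<rho>'] r by (intro summable_on_cmult_right) simp
    fix \<beta> assume "\<beta> \<in> words n"
    show "cmod (?d \<beta>) * \<rho> ^ length \<beta> \<le> ?q ^ N * (cmod (c \<beta>) * \<rho>' ^ length \<beta>)"
    proof (cases "\<beta> \<in> Wlt n N")
      case True then show ?thesis using dv[of \<beta>] q r by simp
    next
      case False
      then have L: "N \<le> length \<beta>" using \<open>\<beta> \<in> words n\<close> unfolding Wlt_def by auto
      have "\<rho> ^ length \<beta> = ?q ^ length \<beta> * \<rho>' ^ length \<beta>" using r by (simp add: power_divide)
      also have "\<dots> \<le> ?q ^ N * \<rho>' ^ length \<beta>" using q r L by (intro mult_right_mono power_decreasing) auto
      finally have "cmod (c \<beta>) * \<rho> ^ length \<beta> \<le> cmod (c \<beta>) * (?q ^ N * \<rho>' ^ length \<beta>)"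
        by (intro mult_left_mono) auto
      then show ?thesis using dv[of \<beta>] False by (simp add: mult_ac)
    qed
  qed
  also have "\<dots> = ?q ^ N * ft_norm n \<rho>' c" unfolding ft_norm_def by (rule infsum_cmult_right')
  finally show ?thesis .
qed

context am begin

lemma hom_unique:
  assumes h1: "\<phi> \<in> ft_cont_homs smul P n r" and h2: "\<psi> \<in> ft_cont_homs smul P n r"
    and g: "\<And>i. i < n \<Longrightarrow> \<phi> (ft_gen i) = \<psi> (ft_gen i)"
  shows "\<phi> = \<psi>"
proof (rule extensionalityI)
  show "\<phi> \<in> extensional (FT n r)" "\<psi> \<in> extensional (FT n r)" using h1 h2 unfolding ft_cont_homs_def by auto
  fix c assume c: "c \<in> FT n r"
  have gm: "map (\<lambda>i. \<phi> (ft_gen i)) [0..<n] = map (\<lambda>i. \<psi> (ft_gen i)) [0..<n]" using g by simp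
  have "p (\<phi> c - \<psi> c) = 0" if p: "p \<in> P" for p
  proof -
    obtain \<rho>1 C1 where r1: "0 < \<rho>1" "\<rho>1 < r" "0 \<le> C1"
      and b1: "\<forall>\<rho>'. \<rho>1 \<le> \<rho>' \<and> \<rho>' < r \<longrightarrow> (\<forall>c\<in>FT n r. p (\<phi> c) \<le> C1 * ft_norm n \<rho>' c)"
      using hom_cont[OF h1 p] by blast
    obtain \<rho>2 C2 where r2: "0 < \<rho>2" "\<rho>2 < r" "0 \<le> C2"
      and b2: "\<forall>\<rho>'. \<rho>2 \<le> \<rho>' \<and> \<rho>' < r \<longrightarrow> (\<forall>c\<in>FT n r. p (\<psi> c) \<le> C2 * ft_norm n \<rho>' c)"
      using hom_cont[OF h2 p] by blast
    define \<rho> where "\<rho> = max \<rho>1 \<rho>2"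
    define \<rho>' where "\<rho>' = (\<rho> + r) / 2"
    have rr: "0 < \<rho>" "\<rho> < \<rho>'" "\<rho>' < r" "\<rho>1 \<le> \<rho>" "\<rho>2 \<le> \<rho>" "\<rho> < r"
      using r1 r2 unfolding \<rho>_def \<rho>'_def by auto
    have bound: "p (\<phi> c - \<psi> c) \<le> (C1 + C2) * ft_norm n \<rho>' c * (\<rho> / \<rho>') ^ N" for N
    proof -
      let ?t = "trunc c (Wlt n N)"
      let ?d = "ft_add c (ft_smul (-1) ?t)"
      have t: "?t \<in> FT n r" by (intro trunc_FT Wlt_fin) (auto simp: Wlt_def)
      have d: "?d \<in> FT n r" by (rule tail_FT[OF c])
      have hd: "th ?d = th c - th ?t" if h: "th \<in> ft_cont_homs smul P n r" for th
      proof -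
        have "th ?d = th c + th (ft_smul (-1) ?t)" using h c FT_smul[OF t] unfolding ft_cont_homs_def by blast
        also have "th (ft_smul (-1) ?t) = smul (-1) (th ?t)" using h t unfolding ft_cont_homs_def by blast
        finally show ?thesis by (simp add: smul_neg1)
      qed
      have tt: "\<phi> ?t = \<psi> ?t"
      proof -
        have F: "finite (Wlt n N)" "Wlt n N \<subseteq> words n" by (auto simp: Wlt_fin) (simp add: Wlt_def)
        have "\<phi> ?t = (\<Sum>\<alpha>\<in>Wlt n N. smul (c \<alpha>) (\<phi> (ew \<alpha>)))" by (rule hom_trunc[OF h1 F])
        also have "\<dots> = (\<Sum>\<alpha>\<in>Wlt n N. smul (c \<alpha>) (\<psi> (ew \<alpha>)))"
          using F(2) hom_ew[OF h1] hom_ew[OF h2] gm by (intro sum.cong refl) auto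
        also have "\<dots> = \<psi> ?t" by (rule hom_trunc[OF h2 F, symmetric])
        finally show ?thesis .
      qed
      have "\<phi> c - \<psi> c = \<phi> ?d - \<psi> ?d" using hd[OF h1] hd[OF h2] tt by simp
      then have "p (\<phi> c - \<psi> c) \<le> p (\<phi> ?d) + p (\<psi> ?d)"
        using sn_add[OF p, of "\<phi> ?d" "- \<psi> ?d"] sn_minus[OF p, of "\<psi> ?d"] by simp
      also have "\<dots> \<le> C1 * ft_norm n \<rho> ?d + C2 * ft_norm n \<rho> ?d"
        using b1 b2 rr d by (intro add_mono) auto
      also have "\<dots> = (C1 + C2) * ft_norm n \<rho> ?d" by (simp add: distrib_right)
      also have "\<dots> \<le> (C1 + C2) * ((\<rho> / \<rho>') ^ N * ft_norm n \<rho>' c)"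
        using r1 r2 rr by (intro mult_left_mono tail_bound[OF c]) auto
      finally show ?thesis by (simp add: mult_ac)
    qed
    have lim: "(\<lambda>N. (C1 + C2) * ft_norm n \<rho>' c * (\<rho> / \<rho>') ^ N) \<longlonglongrightarrow> (C1 + C2) * ft_norm n \<rho>' c * 0"
      using rr by (intro tendsto_intros LIMSEQ_power_zero) simp
    have "p (\<phi> c - \<psi> c) \<le> 0"
      using LIMSEQ_le_const[OF lim] bound by auto
    then show ?thesis using sn_nonneg[OF p] by (simp add: antisym)
  qed
  then have "\<phi> c - \<psi> c = 0" by (rule sep)
  then show "\<phi> c = \<psi> c" by simp
qed

end


context amt begin

lemma gam_gen: "i < n \<Longrightarrow> gam (ft_gen i) = a ! i"
  unfolding ft_gen_ew by (subst gam_ew) (auto simp: words_def word_prod_Cons)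

lemma gam_hom: "gam \<in> ft_cont_homs smul P n r"
  unfolding ft_cont_homs_def mem_Collect_eq
  using gam_ext gam_add gam_smul gam_mult gam_cont
    gam_ew[of "[]"] by (auto simp: ft_one_ew words_def)

end

lemma am_I: "AM_algebra smul P \<Longrightarrow> am smul P" by (simp add: am_def)

lemma exist_gen:
  assumes "AM_algebra smul P" "0 < r" "length a = n" "ssc P n r a"
  shows "\<exists>\<phi>. \<phi> \<in> ft_cont_homs smul P n r \<and> (\<forall>i<n. \<phi> (ft_gen i) = a ! i)"
proof -
  interpret amt smul P n r a using assms by (simp add: amt_def am_def amt_axioms_def)
  show ?thesis using gam_hom gam_gen by blast
qed

lemma unique_gen:
  assumes "AM_algebra smul P" "\<phi> \<in> ft_cont_homs smul P n r" "\<psi> \<in> ft_cont_homs smul P n r"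
    "\<And>i. i < n \<Longrightarrow> \<phi> (ft_gen i) = \<psi> (ft_gen i)"
  shows "\<phi> = \<psi>"
  using am.hom_unique[OF am_I[OF assms(1)] assms(2,3)] assms(4) by blast

lemma exu_gen:
  assumes "AM_algebra smul P" "0 < r" "length a = n" "ssc P n r a"
  shows "\<exists>!\<phi>. \<phi> \<in> ft_cont_homs smul P n r \<and> (\<forall>i<n. \<phi> (ft_gen i) = a ! i)"
  using exist_gen[OF assms] unique_gen[OF assms(1)] by (metis (mono_tags))

lemma gamma_gen:
  assumes "AM_algebra smul P" "0 < r" "length a = n" "ssc P n r a"
  shows "ft_gamma smul P n r a \<in> ft_cont_homs smul P n r \<and> (\<forall>i<n. ft_gamma smul P n r a (ft_gen i) = a ! i)"
  unfolding ft_gamma_def by (rule theI'[OF exu_gen[OF assms]])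

lemma hom_ssc_gen:
  assumes A: "AM_algebra smul P" and h: "\<phi> \<in> ft_cont_homs smul P n r"
  shows "ssc P n r (map (\<lambda>i. \<phi> (ft_gen i)) [0..<n])"
proof -
  interpret am smul P using A by (rule am_I)
  show ?thesis unfolding ssc_Md
  proof
    fix p assume p: "p \<in> P"
    obtain \<rho> C where r: "0 < \<rho>" "\<rho> < r" "0 \<le> C"
      and b: "\<forall>\<rho>'. \<rho> \<le> \<rho>' \<and> \<rho>' < r \<longrightarrow> (\<forall>c\<in>FT n r. p (\<phi> c) \<le> C * ft_norm n \<rho>' c)"
      using hom_cont[OF h p] by blast
    show "lim (\<lambda>d. root d (Md n p (map (\<lambda>i. \<phi> (ft_gen i)) [0..<n]) d)) < r"
    proof (rule bound_ssc[OF p r(1,2)])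
      fix \<alpha> assume \<alpha>: "\<alpha> \<in> words n"
      have "p (word_prod (map (\<lambda>i. \<phi> (ft_gen i)) [0..<n]) \<alpha>) = p (\<phi> (ew \<alpha>))"
        using hom_ew[OF h \<alpha>] by simp
      also have "\<dots> \<le> C * ft_norm n \<rho> (ew \<alpha>)" using b r ew_FT[OF \<alpha>] by blast
      also have "\<dots> = C * \<rho> ^ length \<alpha>" by (simp add: ft_norm_ew[OF \<alpha>])
      finally show "p (word_prod (map (\<lambda>i. \<phi> (ft_gen i)) [0..<n]) \<alpha>) \<le> C * \<rho> ^ length \<alpha>" .
    qed
  qed
qed

lemma gamma_of_hom:
  assumes A: "AM_algebra smul P" and r: "0 < r" and h: "\<phi> \<in> ft_cont_homs smul P n r"
  shows "ft_gamma smul P n r (map (\<lambda>i. \<phi> (ft_gen i)) [0..<n]) = \<phi>"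
proof -
  let ?b = "map (\<lambda>i. \<phi> (ft_gen i)) [0..<n]"
  have g: "ft_gamma smul P n r ?b \<in> ft_cont_homs smul P n r \<and> (\<forall>i<n. ft_gamma smul P n r ?b (ft_gen i) = ?b ! i)"
    by (rule gamma_gen[OF A r _ hom_ssc_gen[OF A h]]) simp
  show ?thesis by (rule unique_gen[OF A conjunct1[OF g] h]) (use g in simp)
qed

lemma natural_gen:
  fixes smulB :: "complex \<Rightarrow> 'b::ring_1 \<Rightarrow> 'b"
  assumes A: "AM_algebra smul P" and r: "0 < r" and B: "AM_algebra smulB PB"
    and psi: "cont_hom smul P smulB PB \<psi>" and len: "length a = n" and ss: "ssc P n r a"
    and c: "c \<in> FT n r"
  shows "\<psi> (ft_gamma smul P n r a c) = ft_gamma smulB PB n r (map \<psi> a) c"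
proof -
  interpret A: am smul P using A by (rule am_I)
  interpret B: am smulB PB using B by (rule am_I)
  let ?g = "ft_gamma smul P n r a"
  have g: "?g \<in> ft_cont_homs smul P n r" "\<And>i. i < n \<Longrightarrow> ?g (ft_gen i) = a ! i"
    using gamma_gen[OF A r len ss] by auto
  have ps: "\<And>x y. \<psi> (x + y) = \<psi> x + \<psi> y" "\<And>z x. \<psi> (smul z x) = smulB z (\<psi> x)"
    "\<And>x y. \<psi> (x * y) = \<psi> x * \<psi> y" "\<psi> 1 = 1" "\<And>q. q \<in> PB \<Longrightarrow> \<exists>p\<in>P. \<exists>C. \<forall>x. q (\<psi> x) \<le> C * p x"
    using psi unfolding cont_hom_def by auto
  have gh: "?g (ft_add c d) = ?g c + ?g d" "?g (ft_smul z c) = smul z (?g c)"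
    "?g (ft_mult c d) = ?g c * ?g d" "?g ft_one = 1"
    if "c \<in> FT n r" "d \<in> FT n r" for c d z
    using g(1) that unfolding ft_cont_homs_def by auto
  define \<phi> where "\<phi> = restrict (\<lambda>c. \<psi> (?g c)) (FT n r)"
  have \<phi>h: "\<phi> \<in> ft_cont_homs smulB PB n r"
    unfolding ft_cont_homs_def mem_Collect_eq
  proof (intro conjI ballI allI)
    show "\<phi> \<in> extensional (FT n r)" unfolding \<phi>_def by simp
    fix c d assume cd: "c \<in> FT n r" "d \<in> FT n r"
    show "\<phi> (ft_add c d) = \<phi> c + \<phi> d" unfolding \<phi>_def using cd FT_add[OF cd] gh(1)[OF cd] ps(1) by simp
    show "\<phi> (ft_mult c d) = \<phi> c * \<phi> d" unfolding \<phi>_def using cd FT_mult[OF cd] gh(3)[OF cd] ps(3) by simp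
  next
    fix z c assume cd: "c \<in> FT n r"
    show "\<phi> (ft_smul z c) = smulB z (\<phi> c)" unfolding \<phi>_def using cd FT_smul[OF cd] gh(2)[OF cd cd] ps(2) by simp
  next
    show "\<phi> ft_one = 1" unfolding \<phi>_def using ft_one_FT gh(4)[OF ft_one_FT ft_one_FT] ps(4) by simp
  next
    fix q assume q: "q \<in> PB"
    obtain p C where p: "p \<in> P" and C: "\<forall>x. q (\<psi> x) \<le> C * p x" using ps(5)[OF q] by blast
    obtain \<rho> C' where rr: "0 < \<rho>" "\<rho> < r" "0 \<le> C'"
      and b: "\<forall>\<rho>'. \<rho> \<le> \<rho>' \<and> \<rho>' < r \<longrightarrow> (\<forall>c\<in>FT n r. p (?g c) \<le> C' * ft_norm n \<rho>' c)"
      using A.hom_cont[OF g(1) p] by blast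
    have "q (\<phi> c) \<le> (max C 0 * C') * ft_norm n \<rho> c" if cc: "c \<in> FT n r" for c
    proof -
      have "q (\<phi> c) = q (\<psi> (?g c))" unfolding \<phi>_def using cc by simp
      also have "\<dots> \<le> C * p (?g c)" using C by blast
      also have "\<dots> \<le> max C 0 * p (?g c)" using A.sn_nonneg[OF p] by (intro mult_right_mono) auto
      also have "\<dots> \<le> max C 0 * (C' * ft_norm n \<rho> c)" using b rr cc by (intro mult_left_mono) auto
      finally show ?thesis by (simp add: mult_ac)
    qed
    then show "\<exists>\<rho>>0. \<rho> < r \<and> (\<exists>C. \<forall>c\<in>FT n r. q (\<phi> c) \<le> C * ft_norm n \<rho> c)" using rr by blast
  qed
  have \<phi>g: "map (\<lambda>i. \<phi> (ft_gen i)) [0..<n] = map \<psi> a"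
  proof (rule nth_equalityI)
    show "length (map (\<lambda>i. \<phi> (ft_gen i)) [0..<n]) = length (map \<psi> a)" using len by simp
    fix i assume "i < length (map (\<lambda>i. \<phi> (ft_gen i)) [0..<n])"
    then have i: "i < n" by simp
    then show "map (\<lambda>i. \<phi> (ft_gen i)) [0..<n] ! i = map \<psi> a ! i"
      unfolding \<phi>_def using ft_gen_FT[OF i] g(2)[OF i] len by simp
  qed
  have "ft_gamma smulB PB n r (map \<psi> a) = \<phi>"
    using gamma_of_hom[OF B r \<phi>h] unfolding \<phi>g .
  then show ?thesis unfolding \<phi>_def using c by simp
qed

theorem proposition6p11:
  fixes smul :: "complex \<Rightarrow> 'a::ring_1 \<Rightarrow> 'a" and P :: "('a \<Rightarrow> real) set"
    and n :: nat and r :: real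
  assumes "AM_algebra smul P" and "0 < r"
  shows "(\<forall>a. length a = n \<and> ssc P n r a \<longrightarrow>
            (\<exists>!\<phi>. \<phi> \<in> ft_cont_homs smul P n r \<and> (\<forall>i<n. \<phi> (ft_gen i) = a ! i)))
       \<and> (\<forall>\<phi>\<in>ft_cont_homs smul P n r. ssc P n r (map (\<lambda>i. \<phi> (ft_gen i)) [0..<n]))
       \<and> bij_betw (ft_gamma smul P n r) {a. length a = n \<and> ssc P n r a} (ft_cont_homs smul P n r)
       \<and> (\<forall>(smulB :: complex \<Rightarrow> 'b::ring_1 \<Rightarrow> 'b) PB \<psi>.
            AM_algebra smulB PB \<and> cont_hom smul P smulB PB \<psi> \<longrightarrow>
            (\<forall>a. length a = n \<and> ssc P n r a \<longrightarrow>
               (\<forall>c\<in>FT n r. \<psi> (ft_gamma smul P n r a c) = ft_gamma smulB PB n r (map \<psi> a) c)))"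
proof (intro conjI allI impI ballI)
  fix a assume "length a = n \<and> ssc P n r a"
  then show "\<exists>!\<phi>. \<phi> \<in> ft_cont_homs smul P n r \<and> (\<forall>i<n. \<phi> (ft_gen i) = a ! i)"
    using exu_gen[OF assms] by blast
next
  fix \<phi> assume "\<phi> \<in> ft_cont_homs smul P n r"
  then show "ssc P n r (map (\<lambda>i. \<phi> (ft_gen i)) [0..<n])" by (rule hom_ssc_gen[OF assms(1)])
next
  show "bij_betw (ft_gamma smul P n r) {a. length a = n \<and> ssc P n r a} (ft_cont_homs smul P n r)"
  proof (rule bij_betwI')
    fix a b assume a: "a \<in> {a. length a = n \<and> ssc P n r a}" and b: "b \<in> {a. length a = n \<and> ssc P n r a}"
    have ga: "\<And>i. i < n \<Longrightarrow> ft_gamma smul P n r a (ft_gen i) = a ! i"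
      using gamma_gen[OF assms] a by blast
    have gb: "\<And>i. i < n \<Longrightarrow> ft_gamma smul P n r b (ft_gen i) = b ! i"
      using gamma_gen[OF assms] b by blast
    show "(ft_gamma smul P n r a = ft_gamma smul P n r b) = (a = b)"
    proof
      assume e: "ft_gamma smul P n r a = ft_gamma smul P n r b"
      show "a = b"
      proof (rule nth_equalityI)
        show "length a = length b" using a b by simp
        fix i assume "i < length a"
        then have "i < n" using a by simp
        then show "a ! i = b ! i" using ga gb e by metis
      qed
    qed simp
  next
    fix a assume "a \<in> {a. length a = n \<and> ssc P n r a}"
    then show "ft_gamma smul P n r a \<in> ft_cont_homs smul P n r" using gamma_gen[OF assms] by blast
  next
    fix \<phi> assume h: "\<phi> \<in> ft_cont_homs smul P n r"
    let ?b = "map (\<lambda>i. \<phi> (ft_gen i)) [0..<n]"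
    have "?b \<in> {a. length a = n \<and> ssc P n r a}" using hom_ssc_gen[OF assms(1) h] by simp
    moreover have "\<phi> = ft_gamma smul P n r ?b" using gamma_of_hom[OF assms h] by simp
    ultimately show "\<exists>a\<in>{a. length a = n \<and> ssc P n r a}. \<phi> = ft_gamma smul P n r a" by blast
  qed
next
  fix smulB :: "complex \<Rightarrow> 'b::ring_1 \<Rightarrow> 'b" and PB \<psi> a c
  assume B: "AM_algebra smulB PB \<and> cont_hom smul P smulB PB \<psi>" and a: "length a = n \<and> ssc P n r a"
    and c: "c \<in> FT n r"
  show "\<psi> (ft_gamma smul P n r a c) = ft_gamma smulB PB n r (map \<psi> a) c"
    using natural_gen[OF assms(1,2) _ _ _ _ c] B a by blast
qed



end
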